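(* Consider the FIR system $y_t = b_1 u_{t-1} + \dots + b_N u_{t-N} + w_t$ satisfying the assumptions below, and run the following procedure (Algorithm 4). Fix a threshold $c_u$ such that $\mathbb{E}[u \mid u > c_u] \neq \mathbb{E}[u]$ and $\mathbb{E}[u \mid u > c_u] \neq (1-N)\mathbb{E}[u]$, where $u$ has the common distribution of the $u_t$, and step sizes $\alpha_j > 0$ with $\sum_j \alpha_j = \infty$, $\sum_j \alpha_j^2 < \infty$. Let $\tau_1 < \tau_2 < \dots$ be the successive times $t \ge 1$ with $t \bmod (N+2) \in \{1,\dots,N\}$ and $u_t > c_u$, and for $n=1,\dots,N$, $i \ge 1$ let $d_{n,i} = \frac{1}{i}\sum_{i'=1}^{i} y_{\tau_{i'}+n}$ (computed at the output quantizer). At the input quantizer let $e_{1,t} = \frac{1}{t}\sum_{t'=1}^t u_{t'}$, let $t_1 < t_2 < \dots$ be all times $t\ge1$ with $u_t > c_u$ and $e_{2,k} = \frac{1}{k}\sum_{k'=1}^k u_{t_{k'}}$. For $j \ge 1$ let $s_j = \tau_{Nj}$ and $k_j$ the number of times $t \le s_j$ with $u_t > c_u$. With zero initial values, define for $j \ge 1$ \[ \hat{d}_{n,j+1} = \hat{d}_{n,j} + \alpha_j\,\mathrm{sgn}(d_{n,Nj} - \hat{d}_{n,j}),\ n=1,\dots,N,\quad \hat{e}_{1,j+1} = \hat{e}_{1,j} + \alpha_j\,\mathrm{sgn}(e_{1,s_j} - \hat{e}_{1,j}),\quad \hat{e}_{2,j+1} = \hat{e}_{2,j} + \alpha_j\,\mathrm{sgn}(e_{2,k_j}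 - \hat{e}_{2,j}), \] (only the sign values being transmitted to the estimator), let $\mathbf{U}_j$ be the $N\times N$ matrix with all diagonal entries $\hat{e}_{2,j}$ and all off-diagonal entries $\hat{e}_{1,j}$, and set $[\hat{b}_{1,j},\dots,\hat{b}_{N,j}]^T = \mathbf{U}_j^{-1}[\hat{d}_{1,j},\dots,\hat{d}_{N,j}]^T$ if $\mathbf{U}_j$ is invertible and $=0$ otherwise. Then $\hat{b}_{n,j} \to b_n$ almost surely as $j \to \infty$, for every $n=1,\dots,N$.
   Context: Standing assumptions: the input and output quantizers have computational and storage capabilities (they can compute the running averages described, with access to the unquantized $u_t$, $y_t$); $\{u_t\}$ and $\{w_t\}$ are i.i.d. sequences, mutually independent, and $w_t$ has zero mean; the model order $N$ is known; the input distribution is not assumed known to the estimator ($\mathbb{E}[u]$ and $\mathbb{E}[u\mid u>c_u]$ are assumed to exist). The function $\mathrm{sgn}$ is defined by $\mathrm{sgn}(x) = -1$ for $x<0$ and $\mathrm{sgn}(x) = 1$ for $x>0$ (the paper does not specify a value at $0$). *)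

theory Defs
  imports "HOL-Probability.Probability" "Jordan_Normal_Form.Gauss_Jordan_Elimination"
begin

definition fir_out :: "(nat \<Rightarrow> real) \<Rightarrow> nat \<Rightarrow> (int \<Rightarrow> 'a \<Rightarrow> real) \<Rightarrow> (int \<Rightarrow> 'a \<Rightarrow> real)
    \<Rightarrow> int \<Rightarrow> 'a \<Rightarrow> real" where
  "fir_out b N u w t \<omega> = (\<Sum>n=1..N. b n * u (t - int n) \<omega>) + w t \<omega>"

definition cond_exp_gt :: "'a measure \<Rightarrow> ('a \<Rightarrow> real) \<Rightarrow> real \<Rightarrow> real" where
  "cond_exp_gt M X c =
     (LINT x|M. indicator {\<omega> \<in> space M. X \<omega> > c} x * X x) / measure M {\<omega> \<in> space M. X \<omega> > c}"

definition tau :: "nat \<Rightarrow> real \<Rightarrow> (int \<Rightarrow> 'a \<Rightarrow> real) \<Rightarrow> 'a \<Rightarrow> nat \<Rightarrow> nat" where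
  "tau N c u \<omega> i = enumerate {t::nat. 1 \<le> t \<and> t mod (N+2) \<in> {1..N} \<and> u (int t) \<omega> > c} (i - 1)"

definition d_avg :: "(nat \<Rightarrow> real) \<Rightarrow> nat \<Rightarrow> real \<Rightarrow> (int \<Rightarrow> 'a \<Rightarrow> real) \<Rightarrow> (int \<Rightarrow> 'a \<Rightarrow> real)
    \<Rightarrow> nat \<Rightarrow> nat \<Rightarrow> 'a \<Rightarrow> real" where
  "d_avg b N c u w n i \<omega> =
     (\<Sum>i'=1..i. fir_out b N u w (int (tau N c u \<omega> i' + n)) \<omega>) / real i"

definition e1_avg :: "(int \<Rightarrow> 'a \<Rightarrow> real) \<Rightarrow> nat \<Rightarrow> 'a \<Rightarrow> real" where
  "e1_avg u t \<omega> = (\<Sum>t'=1..t. u (int t') \<omega>) / real t"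

definition exc_time :: "real \<Rightarrow> (int \<Rightarrow> 'a \<Rightarrow> real) \<Rightarrow> 'a \<Rightarrow> nat \<Rightarrow> nat" where
  "exc_time c u \<omega> k = enumerate {t::nat. 1 \<le> t \<and> u (int t) \<omega> > c} (k - 1)"

definition e2_avg :: "real \<Rightarrow> (int \<Rightarrow> 'a \<Rightarrow> real) \<Rightarrow> nat \<Rightarrow> 'a \<Rightarrow> real" where
  "e2_avg c u k \<omega> = (\<Sum>k'=1..k. u (int (exc_time c u \<omega> k')) \<omega>) / real k"

definition s_time :: "nat \<Rightarrow> real \<Rightarrow> (int \<Rightarrow> 'a \<Rightarrow> real) \<Rightarrow> 'a \<Rightarrow> nat \<Rightarrow> nat" where
  "s_time N c u \<omega> j = tau N c u \<omega> (N * j)"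

definition k_count :: "nat \<Rightarrow> real \<Rightarrow> (int \<Rightarrow> 'a \<Rightarrow> real) \<Rightarrow> 'a \<Rightarrow> nat \<Rightarrow> nat" where
  "k_count N c u \<omega> j = card {t::nat. 1 \<le> t \<and> t \<le> s_time N c u \<omega> j \<and> u (int t) \<omega> > c}"

text \<open>Sign-error recursion: sa_rec k represents the estimate with index k+1;
  sa_rec 0 = 0 (zero initial value), and
  hat_{j+1} = hat_j + alpha_j * sg (x_j - hat_j).\<close>
fun sa_rec :: "(real \<Rightarrow> real) \<Rightarrow> (nat \<Rightarrow> real) \<Rightarrow> (nat \<Rightarrow> real) \<Rightarrow> nat \<Rightarrow> real" where
  "sa_rec sg \<alpha> x 0 = 0"
| "sa_rec sg \<alpha> x (Suc k) = sa_rec sg \<alpha> x k + \<alpha> (Suc k) * sg (x (Suc k) - sa_rec sg \<alpha> x k)"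

text \<open>Estimate with index j >= 1 (index 0 is a dummy equal to index 1).\<close>
definition sa_hat :: "(real \<Rightarrow> real) \<Rightarrow> (nat \<Rightarrow> real) \<Rightarrow> (nat \<Rightarrow> real) \<Rightarrow> nat \<Rightarrow> real" where
  "sa_hat sg \<alpha> x j = sa_rec sg \<alpha> x (j - 1)"

definition dhat :: "(real \<Rightarrow> real) \<Rightarrow> (nat \<Rightarrow> real) \<Rightarrow> (nat \<Rightarrow> real) \<Rightarrow> nat \<Rightarrow> real
   \<Rightarrow> (int \<Rightarrow> 'a \<Rightarrow> real) \<Rightarrow> (int \<Rightarrow> 'a \<Rightarrow> real) \<Rightarrow> nat \<Rightarrow> nat \<Rightarrow> 'a \<Rightarrow> real" where
  "dhat sg \<alpha> b N c u w n j \<omega> = sa_hat sg \<alpha> (\<lambda>j. d_avg b N c u w n (N * j) \<omega>) j"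

definition e1hat :: "(real \<Rightarrow> real) \<Rightarrow> (nat \<Rightarrow> real) \<Rightarrow> nat \<Rightarrow> real \<Rightarrow> (int \<Rightarrow> 'a \<Rightarrow> real)
   \<Rightarrow> nat \<Rightarrow> 'a \<Rightarrow> real" where
  "e1hat sg \<alpha> N c u j \<omega> = sa_hat sg \<alpha> (\<lambda>j. e1_avg u (s_time N c u \<omega> j) \<omega>) j"

definition e2hat :: "(real \<Rightarrow> real) \<Rightarrow> (nat \<Rightarrow> real) \<Rightarrow> nat \<Rightarrow> real \<Rightarrow> (int \<Rightarrow> 'a \<Rightarrow> real)
   \<Rightarrow> nat \<Rightarrow> 'a \<Rightarrow> real" where
  "e2hat sg \<alpha> N c u j \<omega> = sa_hat sg \<alpha> (\<lambda>j. e2_avg c u (k_count N c u \<omega> j) \<omega>) j"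

definition U_mat :: "(real \<Rightarrow> real) \<Rightarrow> (nat \<Rightarrow> real) \<Rightarrow> nat \<Rightarrow> real \<Rightarrow> (int \<Rightarrow> 'a \<Rightarrow> real)
   \<Rightarrow> nat \<Rightarrow> 'a \<Rightarrow> real mat" where
  "U_mat sg \<alpha> N c u j \<omega> =
     mat N N (\<lambda>(p, q). if p = q then e2hat sg \<alpha> N c u j \<omega> else e1hat sg \<alpha> N c u j \<omega>)"

definition bhat :: "(real \<Rightarrow> real) \<Rightarrow> (nat \<Rightarrow> real) \<Rightarrow> (nat \<Rightarrow> real) \<Rightarrow> nat \<Rightarrow> real
   \<Rightarrow> (int \<Rightarrow> 'a \<Rightarrow> real) \<Rightarrow> (int \<Rightarrow> 'a \<Rightarrow> real) \<Rightarrow> nat \<Rightarrow> nat \<Rightarrow> 'a \<Rightarrow> real" where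
  "bhat sg \<alpha> b N c u w n j \<omega> =
     (let dv = vec N (\<lambda>p. dhat sg \<alpha> b N c u w (p + 1) j \<omega>) in
      case mat_inverse (U_mat sg \<alpha> N c u j \<omega>) of
        Some B \<Rightarrow> (B *\<^sub>v dv) $ (n - 1)
      | None \<Rightarrow> 0)"

end

theory Submission
  imports Defs "Jordan_Normal_Form.Determinant"
begin


definition trunc :: "real \<Rightarrow> real \<Rightarrow> real" where
  "trunc c x = (if x \<le> c then x else 0)"

lemma trunc_borel[measurable]: "trunc c \<in> borel_measurable borel"
  unfolding trunc_def by measurable

lemma tail_count_le:
  fixes x :: real assumes "x \<ge> 0"
  shows "(\<Sum>k<n. if x > real (Suc k) then 1 else 0) \<le> min (real n) x"
proof (induction n)
  case 0 then show ?case using assms by simp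
next
  case (Suc n)
  then show ?case by (auto simp: min_def split: if_splits)
qed

lemma geo_bound:
  fixes \<beta> x :: real assumes "\<beta> > 1" "x \<ge> 0"
  shows "(\<Sum>n<M. if x \<le> \<beta>^n then x / \<beta>^n else 0) \<le> min 1 x * \<beta> / (\<beta> - 1)"
  using assms(2)
proof (induction M arbitrary: x)
  case 0 then show ?case using assms by (auto simp: min_def)
next
  case (Suc M)
  have sh: "\<And>n. (if x \<le> \<beta>^Suc n then x / \<beta>^Suc n else 0) = (if x/\<beta> \<le> \<beta>^n then (x/\<beta>) / \<beta>^n else 0)"
    using assms(1) by (auto simp: field_simps)
  have eq: "(\<Sum>n<Suc M. if x \<le> \<beta>^n then x / \<beta>^n else 0)
      = (if x \<le> 1 then x else 0) + (\<Sum>n<M. if x/\<beta> \<le> \<beta>^n then (x/\<beta>) / \<beta>^n else 0)"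
    unfolding sum.lessThan_Suc_shift sh by simp
  have IH: "(\<Sum>n<M. if x/\<beta> \<le> \<beta>^n then (x/\<beta>) / \<beta>^n else 0) \<le> min 1 (x/\<beta>) * \<beta> / (\<beta> - 1)"
    using Suc.IH Suc.prems assms(1) by simp
  show ?case
  proof (cases "x \<le> 1")
    case True
    have "min 1 (x/\<beta>) = x/\<beta>" using True assms(1) Suc.prems by (auto simp: min_def field_simps)
    moreover have "min 1 x = x" using True by simp
    moreover have "x + x / \<beta> * \<beta> / (\<beta> - 1) = x * \<beta> / (\<beta> - 1)" using assms(1) by (simp add: field_simps)
    ultimately show ?thesis using eq IH True by simp
  next
    case False
    have "min 1 (x/\<beta>) * \<beta> / (\<beta> - 1) \<le> 1 * \<beta> / (\<beta> - 1)"
      using assms(1) by (intro divide_right_mono mult_right_mono) auto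
    then show ?thesis using eq IH False by simp
  qed
qed

definition kseq :: "real \<Rightarrow> nat \<Rightarrow> nat" where
  "kseq \<beta> n = nat \<lfloor>\<beta>^n\<rfloor>"

lemma kseq_ge1: assumes "\<beta> \<ge> 1" shows "kseq \<beta> n \<ge> 1"
proof -
  have "\<beta>^n \<ge> 1" using assms by simp
  then show ?thesis unfolding kseq_def by linarith
qed

lemma kseq_le: assumes "\<beta> \<ge> 1" shows "real (kseq \<beta> n) \<le> \<beta>^n"
  unfolding kseq_def using assms by simp

lemma kseq_ge_half: assumes "\<beta> \<ge> 1" shows "real (kseq \<beta> n) \<ge> \<beta>^n / 2"
proof -
  have "\<beta>^n \<ge> 1" using assms by simp
  moreover have "real (kseq \<beta> n) > \<beta>^n - 1" unfolding kseq_def using \<open>\<beta>^n \<ge> 1\<close> by linarith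
  moreover have "real (kseq \<beta> n) \<ge> 1" using kseq_ge1[OF assms] by simp
  ultimately show ?thesis by linarith
qed

lemma kseq_mono: assumes "\<beta> \<ge> 1" "m \<le> n" shows "kseq \<beta> m \<le> kseq \<beta> n"
  unfolding kseq_def using assms by (auto intro!: nat_mono floor_mono power_increasing)

lemma kseq_tendsto: assumes "\<beta> > 1" shows "filterlim (kseq \<beta>) at_top sequentially"
  unfolding filterlim_at_top
proof
  fix Z :: nat
  obtain n where n: "real (2 * Z) < \<beta>^n" using real_arch_pow[OF assms] by blast
  show "eventually (\<lambda>m. Z \<le> kseq \<beta> m) sequentially"
    unfolding eventually_sequentially
  proof (intro exI allI impI)
    fix m assume "n \<le> m"
    then have "\<beta>^n \<le> \<beta>^m" using assms by (intro power_increasing) auto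
    moreover have "real (kseq \<beta> m) \<ge> \<beta>^m/2" using assms by (intro kseq_ge_half) auto
    ultimately have "real Z \<le> real (kseq \<beta> m)" using n by linarith
    then show "Z \<le> kseq \<beta> m" by simp
  qed
qed

lemma var_pointwise:
  fixes \<beta> x :: real assumes "\<beta> > 1" "x \<ge> 0"
  shows "(\<Sum>n<M. (\<Sum>i<kseq \<beta> n. (trunc (real (Suc i)) x)^2) / (real (kseq \<beta> n))^2)
        \<le> 2 * \<beta> / (\<beta> - 1) * x"
proof -
  have tm: "(\<Sum>i<kseq \<beta> n. (trunc (real (Suc i)) x)^2) / (real (kseq \<beta> n))^2
      \<le> 2 * x * (if x \<le> \<beta>^n then x / \<beta>^n else 0)" for n
  proof -
    define k where "k = kseq \<beta> n"
    have k1: "real k \<ge> 1" using kseq_ge1[of \<beta> n] assms unfolding k_def by simp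
    have kle: "real k \<le> \<beta>^n" using kseq_le[of \<beta> n] assms unfolding k_def by simp
    have kge: "real k \<ge> \<beta>^n / 2" using kseq_ge_half[of \<beta> n] assms unfolding k_def by simp
    have bpos: "\<beta>^n > 0" using assms by simp
    show ?thesis
    proof (cases "x \<le> real k")
      case True
      have "(\<Sum>i<k. (trunc (real (Suc i)) x)^2) \<le> (\<Sum>i<k. x^2)"
        by (intro sum_mono) (auto simp: trunc_def)
      also have "\<dots> = real k * x^2" by simp
      finally have "(\<Sum>i<k. (trunc (real (Suc i)) x)^2) / (real k)^2 \<le> real k * x^2 / (real k)^2"
        by (intro divide_right_mono) auto
      also have "\<dots> = x^2 / real k" using k1 by (simp add: power2_eq_square)
      also have "\<dots> \<le> x^2 / (\<beta>^n / 2)"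
        using kge bpos assms k1 by (intro divide_left_mono) auto
      also have "\<dots> = 2 * x * (x / \<beta>^n)" by (simp add: power2_eq_square field_simps)
      finally show ?thesis using True kle unfolding k_def by auto
    next
      case False
      have "(\<Sum>i<k. (trunc (real (Suc i)) x)^2) = 0"
      proof (intro sum.neutral ballI)
        fix i assume "i \<in> {..<k}"
        then have "real (Suc i) \<le> real k" by simp
        then show "(trunc (real (Suc i)) x)^2 = 0" using False by (simp add: trunc_def)
      qed
      then show ?thesis using assms unfolding k_def[symmetric] 
        by (auto intro!: mult_nonneg_nonneg divide_nonneg_nonneg)
    qed
  qed
  have "(\<Sum>n<M. (\<Sum>i<kseq \<beta> n. (trunc (real (Suc i)) x)^2) / (real (kseq \<beta> n))^2)
      \<le> (\<Sum>n<M. 2 * x * (if x \<le> \<beta>^n then x / \<beta>^n else 0))"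
    by (intro sum_mono tm)
  also have "\<dots> = 2 * x * (\<Sum>n<M. (if x \<le> \<beta>^n then x / \<beta>^n else 0))"
    by (simp add: sum_distrib_left)
  also have "\<dots> \<le> 2 * x * (min 1 x * \<beta> / (\<beta> - 1))"
    using geo_bound[OF assms] assms by (intro mult_left_mono) auto
  also have "\<dots> \<le> 2 * x * (1 * \<beta> / (\<beta> - 1))"
    using assms by (intro mult_left_mono divide_right_mono mult_right_mono) auto
  finally show ?thesis by (simp add: mult_ac)
qed


lemma (in prob_space) var_sum:
  fixes Y :: "'i \<Rightarrow> 'a \<Rightarrow> real"
  assumes ind: "\<And>i j. i \<in> I \<Longrightarrow> j \<in> I \<Longrightarrow> i \<noteq> j \<Longrightarrow> indep_var borel (Y i) borel (Y j)"
  and meas: "\<And>i. i\<in>I \<Longrightarrow> Y i \<in> borel_measurable M"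
  and bnd: "\<And>i \<omega>. i\<in>I \<Longrightarrow> \<omega> \<in> space M \<Longrightarrow> \<bar>Y i \<omega>\<bar> \<le> B"
  and fin: "finite I"
  shows "variance (\<lambda>\<omega>. \<Sum>i\<in>I. Y i \<omega>) = (\<Sum>i\<in>I. variance (Y i))"
proof -
  have intY: "integrable M (Y i)" if "i \<in> I" for i
    using that meas bnd by (intro integrable_const_bound[where B=B]) auto
  define Z where "Z i \<omega> = Y i \<omega> - expectation (Y i)" for i \<omega>
  have measZ: "Z i \<in> borel_measurable M" if "i \<in> I" for i
    using meas[OF that] unfolding Z_def by measurable
  have intZ: "integrable M (Z i)" if "i \<in> I" for i
    using intY[OF that] unfolding Z_def by simp
  have bndZ: "\<bar>Z i \<omega>\<bar> \<le> B + \<bar>expectation (Y i)\<bar>" if "i \<in> I" "\<omega> \<in> space M" for i \<omega>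
    using bnd[OF that] unfolding Z_def by linarith
  have intZZ: "integrable M (\<lambda>\<omega>. Z i \<omega> * Z j \<omega>)" if "i \<in> I" "j \<in> I" for i j
  proof (rule integrable_const_bound[where B="(B + \<bar>expectation (Y i)\<bar>) * (B + \<bar>expectation (Y j)\<bar>)"])
    show "AE x in M. norm (Z i x * Z j x) \<le> (B + \<bar>expectation (Y i)\<bar>) * (B + \<bar>expectation (Y j)\<bar>)"
    proof (rule AE_I2)
      fix x assume x: "x \<in> space M"
      have "\<bar>Z i x\<bar> * \<bar>Z j x\<bar> \<le> (B + \<bar>expectation (Y i)\<bar>) * (B + \<bar>expectation (Y j)\<bar>)"
        by (rule mult_mono) (use bndZ that x in \<open>auto intro: order_trans[OF abs_ge_zero]\<close>)
      then show "norm (Z i x * Z j x) \<le> (B + \<bar>expectation (Y i)\<bar>) * (B + \<bar>expectation (Y j)\<bar>)"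
        by (simp add: abs_mult)
    qed
    show "(\<lambda>\<omega>. Z i \<omega> * Z j \<omega>) \<in> borel_measurable M" using measZ that by measurable
  qed
  have EZ: "expectation (Z i) = 0" if "i \<in> I" for i
    using intY[OF that] unfolding Z_def by (simp add: prob_space)
  have cross: "expectation (\<lambda>\<omega>. Z i \<omega> * Z j \<omega>) = (if i = j then variance (Y i) else 0)"
    if "i \<in> I" "j \<in> I" for i j
  proof (cases "i = j")
    case True then show ?thesis by (simp add: Z_def power2_eq_square)
  next
    case False
    have "indep_var borel ((\<lambda>x. x - expectation (Y i)) \<circ> Y i) borel ((\<lambda>x. x - expectation (Y j)) \<circ> Y j)"
      by (rule indep_var_compose[OF ind[OF that False]]) auto
    then have "indep_var borel (Z i) borel (Z j)" by (simp add: Z_def[abs_def] comp_def)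
    then have "expectation (\<lambda>\<omega>. Z i \<omega> * Z j \<omega>) = expectation (Z i) * expectation (Z j)"
      using intZ that by (intro indep_var_lebesgue_integral) auto
    then show ?thesis using EZ that False by simp
  qed
  have ES: "expectation (\<lambda>\<omega>. \<Sum>i\<in>I. Y i \<omega>) = (\<Sum>i\<in>I. expectation (Y i))"
    using intY by (simp add: integral_sum)
  have "variance (\<lambda>\<omega>. \<Sum>i\<in>I. Y i \<omega>) = expectation (\<lambda>\<omega>. (\<Sum>i\<in>I. Z i \<omega>)^2)"
    unfolding ES Z_def by (simp add: sum_subtractf)
  also have "\<dots> = expectation (\<lambda>\<omega>. \<Sum>i\<in>I. \<Sum>j\<in>I. Z i \<omega> * Z j \<omega>)"
    by (simp add: power2_eq_square sum_product)
  also have "\<dots> = (\<Sum>i\<in>I. \<Sum>j\<in>I. expectation (\<lambda>\<omega>. Z i \<omega> * Z j \<omega>))"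
    using intZZ by (simp add: integral_sum integrable_sum)
  also have "\<dots> = (\<Sum>i\<in>I. \<Sum>j\<in>I. (if i = j then variance (Y i) else 0))"
    using cross by (intro sum.cong refl) auto
  also have "\<dots> = (\<Sum>i\<in>I. variance (Y i))"
    using fin by (simp add: sum.delta)
  finally show ?thesis .
qed

lemma (in prob_space) same_distr_integral:
  fixes X Y :: "'a \<Rightarrow> real" and f :: "real \<Rightarrow> real"
  assumes eq: "distr M borel X = distr M borel Y" and m: "X \<in> borel_measurable M" "Y \<in> borel_measurable M"
    "f \<in> borel_measurable borel"
  shows "(\<integral>\<omega>. f (X \<omega>) \<partial>M) = (\<integral>\<omega>. f (Y \<omega>) \<partial>M)"
proof -
  have "(\<integral>\<omega>. f (X \<omega>) \<partial>M) = (\<integral>x. f x \<partial>distr M borel X)" by (rule integral_distr[symmetric]) (use m in auto)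
  also have "\<dots> = (\<integral>x. f x \<partial>distr M borel Y)" using eq by simp
  also have "\<dots> = (\<integral>\<omega>. f (Y \<omega>) \<partial>M)" by (rule integral_distr) (use m in auto)
  finally show ?thesis .
qed

lemma (in prob_space) same_distr_integrable:
  fixes X Y :: "'a \<Rightarrow> real" and f :: "real \<Rightarrow> real"
  assumes eq: "distr M borel X = distr M borel Y" and m: "X \<in> borel_measurable M" "Y \<in> borel_measurable M"
    "f \<in> borel_measurable borel" and i: "integrable M (\<lambda>\<omega>. f (Y \<omega>))"
  shows "integrable M (\<lambda>\<omega>. f (X \<omega>))"
proof -
  have "integrable (distr M borel Y) f" using i m by (subst integrable_distr_eq) auto
  then have "integrable (distr M borel X) f" using eq by simp
  then show ?thesis using m by (subst (asm) integrable_distr_eq) auto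
qed

lemma (in prob_space) same_distr_prob:
  fixes X Y :: "'a \<Rightarrow> real"
  assumes eq: "distr M borel X = distr M borel Y" and m: "X \<in> borel_measurable M" "Y \<in> borel_measurable M"
    and A: "A \<in> sets borel"
  shows "prob {\<omega>\<in>space M. X \<omega> \<in> A} = prob {\<omega>\<in>space M. Y \<omega> \<in> A}"
proof -
  have 1: "{\<omega>\<in>space M. X \<omega> \<in> A} = X -` A \<inter> space M" "{\<omega>\<in>space M. Y \<omega> \<in> A} = Y -` A \<inter> space M" by auto
  have "prob (X -` A \<inter> space M) = measure (distr M borel X) A" by (rule measure_distr[symmetric]) (use m A in auto)
  also have "\<dots> = measure (distr M borel Y) A" using eq by simp
  also have "\<dots> = prob (Y -` A \<inter> space M)" by (rule measure_distr) (use m A in auto)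
  finally show ?thesis unfolding 1 .
qed


lemma cesaro:
  fixes a :: "nat \<Rightarrow> real"
  assumes lim: "a \<longlonglongrightarrow> L"
  shows "(\<lambda>n. (\<Sum>i<n. a i) / real n) \<longlonglongrightarrow> L"
proof (rule LIMSEQ_I)
  fix r :: real assume r: "r > 0"
  obtain N where N: "\<And>i. i \<ge> N \<Longrightarrow> norm (a i - L) < r/2"
    using LIMSEQ_D[OF lim, of "r/2"] r by auto
  define C where "C = (\<Sum>i<N. \<bar>a i - L\<bar>)"
  have C0: "C \<ge> 0" unfolding C_def by (intro sum_nonneg) auto
  obtain n0 :: nat where n0: "real n0 > 2*C/r" using reals_Archimedean2 by blast
  show "\<exists>no. \<forall>n\<ge>no. norm ((\<Sum>i<n. a i)/real n - L) < r"
  proof (intro exI[of _ "max (Suc N) (Suc n0)"] allI impI)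
    fix n assume n: "max (Suc N) (Suc n0) \<le> n"
    then have npos: "real n > 0" by simp
    have e1: "(\<Sum>i<n. a i)/real n - L = (\<Sum>i<n. (a i - L)) / real n"
      using npos by (simp add: sum_subtractf field_simps)
    have Nn: "N \<le> n" using n by simp
    have split: "(\<Sum>i<n. (a i - L)) = (\<Sum>i<N. (a i - L)) + (\<Sum>i\<in>{N..<n}. (a i - L))"
      using Nn by (simp add: lessThan_atLeast0 sum.atLeastLessThan_concat)
    have b1: "\<bar>\<Sum>i<N. (a i - L)\<bar> \<le> C" unfolding C_def by (rule sum_abs)
    have "\<bar>\<Sum>i\<in>{N..<n}. (a i - L)\<bar> \<le> (\<Sum>i\<in>{N..<n}. \<bar>a i - L\<bar>)" by (rule sum_abs)
    also have "\<dots> \<le> (\<Sum>i\<in>{N..<n}. r/2)"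
    proof (intro sum_mono)
      fix i assume "i \<in> {N..<n}" then show "\<bar>a i - L\<bar> \<le> r/2" using N[of i] by simp
    qed
    also have "\<dots> = real (n - N) * (r/2)" by simp
    also have "\<dots> \<le> real n * (r/2)" using r by (intro mult_right_mono) auto
    finally have b2: "\<bar>\<Sum>i\<in>{N..<n}. (a i - L)\<bar> \<le> real n * (r/2)" .
    have "\<bar>\<Sum>i<n. (a i - L)\<bar> \<le> C + real n * (r/2)" using split b1 b2 by linarith
    then have "\<bar>(\<Sum>i<n. (a i - L)) / real n\<bar> \<le> (C + real n * (r/2)) / real n"
      using npos by (simp add: abs_div divide_right_mono)
    also have "\<dots> = C / real n + r/2" using npos by (simp add: field_simps)
    also have "\<dots> < r/2 + r/2"
    proof -
      have "real n > 2*C/r" using n n0 by linarith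
      then have "C / real n < r/2" using npos r by (simp add: field_simps)
      then show ?thesis by linarith
    qed
    finally show "norm ((\<Sum>i<n. a i)/real n - L) < r" using e1 by simp
  qed
qed

lemma interp:
  fixes S :: "nat \<Rightarrow> real"
  assumes mono: "\<And>m n. m \<le> n \<Longrightarrow> S m \<le> S n" and nn: "\<And>m. S m \<ge> 0" and \<beta>: "\<beta> > 1"
  and lim: "(\<lambda>n. S (kseq \<beta> n) / real (kseq \<beta> n)) \<longlonglongrightarrow> \<mu>" and \<epsilon>: "\<epsilon> > 0"
  shows "\<exists>m0. \<forall>m\<ge>m0. S m / real m \<le> (\<mu>+\<epsilon>)*\<beta>^2 \<and> S m / real m \<ge> (\<mu>-\<epsilon>)/\<beta>^2"
proof -
  let ?k = "kseq \<beta>"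
  obtain N1 where N1: "\<And>n. n \<ge> N1 \<Longrightarrow> norm (S (?k n) / real (?k n) - \<mu>) < \<epsilon>"
    using LIMSEQ_D[OF lim \<epsilon>] by auto
  obtain N2 where N2: "\<beta>/(\<beta>-1) < \<beta>^N2" using real_arch_pow[OF \<beta>] by blast
  have kratio: "real (?k (Suc n)) \<le> \<beta>^2 * real (?k n)" if "n \<ge> N2" for n
  proof -
    have "\<beta>^N2 \<le> \<beta>^n" using that \<beta> by (intro power_increasing) auto
    then have bn: "\<beta>/(\<beta>-1) < \<beta>^n" using N2 by linarith
    have "real (?k n) > \<beta>^n - 1" unfolding kseq_def using \<beta> by simp
    moreover have "\<beta>^n - 1 \<ge> \<beta>^n / \<beta>"
    proof -
      have "\<beta> < \<beta>^n * (\<beta>-1)" using bn \<beta> by (simp add: field_simps)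
      then show ?thesis using \<beta> by (simp add: field_simps)
    qed
    ultimately have "real (?k n) \<ge> \<beta>^n / \<beta>" by linarith
    then have "\<beta>^2 * real (?k n) \<ge> \<beta>^2 * (\<beta>^n / \<beta>)" using \<beta> by (intro mult_left_mono) auto
    moreover have "\<beta>^2 * (\<beta>^n / \<beta>) = \<beta>^Suc n" using \<beta> by (simp add: power2_eq_square field_simps)
    moreover have "real (?k (Suc n)) \<le> \<beta>^Suc n" using kseq_le[of \<beta> "Suc n"] \<beta> by simp
    ultimately show ?thesis by linarith
  qed
  define N0 where "N0 = max N1 N2"
  have ktend: "filterlim ?k at_top sequentially" by (rule kseq_tendsto[OF \<beta>])
  show ?thesis
  proof (intro exI[of _ "max 1 (?k N0)"] allI impI)
    fix m assume m: "max 1 (?k N0) \<le> m"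
    then have mpos: "real m > 0" by simp
    define P where "P n \<longleftrightarrow> ?k n \<le> m" for n
    obtain n' where n': "\<And>n. n \<ge> n' \<Longrightarrow> ?k n \<ge> Suc m"
      using ktend unfolding filterlim_at_top eventually_sequentially by blast
    have Pb: "y \<le> n'" if "P y" for y
    proof (rule ccontr)
      assume "\<not> y \<le> n'" then have "?k y \<ge> Suc m" using n' by simp
      then show False using that unfolding P_def by simp
    qed
    have PN0: "P N0" using m unfolding P_def by simp
    define n where "n = Greatest P"
    have Pn: "P n" unfolding n_def by (rule GreatestI_nat[of P N0 n', OF PN0 Pb])
    have nN0: "N0 \<le> n" unfolding n_def by (rule Greatest_le_nat[of P N0 n', OF PN0 Pb])
    have nP: "\<not> P (Suc n)"
    proof
      assume a: "P (Suc n)"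
      have "Suc n \<le> Greatest P" by (rule Greatest_le_nat[of P "Suc n" n', OF a Pb])
      then show False unfolding n_def by simp
    qed
    have kn: "?k n \<le> m" using Pn unfolding P_def .
    have kn1: "m < ?k (Suc n)" using nP unfolding P_def by simp
    have knpos: "real (?k n) \<ge> 1" using kseq_ge1[of \<beta> n] \<beta> by simp
    have kn1pos: "real (?k (Suc n)) \<ge> 1" using kseq_ge1[of \<beta> "Suc n"] \<beta> by simp
    have kr: "real (?k (Suc n)) \<le> \<beta>^2 * real (?k n)" using kratio[of n] nN0 unfolding N0_def by simp
    have c1: "\<bar>S (?k (Suc n)) / real (?k (Suc n)) - \<mu>\<bar> < \<epsilon>" using N1[of "Suc n"] nN0 unfolding N0_def by simp
    have c0: "\<bar>S (?k n) / real (?k n) - \<mu>\<bar> < \<epsilon>" using N1[of n] nN0 unfolding N0_def by simp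
    have b2: "\<beta>^2 > 0" using \<beta> by simp
    have up: "S m / real m \<le> (\<mu>+\<epsilon>)*\<beta>^2"
    proof -
      have "S (?k (Suc n)) / real (?k (Suc n)) < \<mu> + \<epsilon>" using c1 by linarith
      then have s1: "S (?k (Suc n)) < (\<mu>+\<epsilon>) * real (?k (Suc n))" using kn1pos by (simp add: field_simps)
      have pe: "\<mu> + \<epsilon> > 0"
      proof (rule ccontr)
        assume "\<not> \<mu>+\<epsilon> > 0"
        then have "(\<mu>+\<epsilon>) * real (?k (Suc n)) \<le> 0" using kn1pos by (simp add: mult_nonpos_nonneg)
        then show False using s1 nn[of "?k (Suc n)"] by linarith
      qed
      have "S m \<le> S (?k (Suc n))" using kn1 by (intro mono) simp
      also have "\<dots> \<le> (\<mu>+\<epsilon>) * real (?k (Suc n))" using s1 by simp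
      also have "\<dots> \<le> (\<mu>+\<epsilon>) * (\<beta>^2 * real (?k n))" using pe kr by (intro mult_left_mono) auto
      also have "\<dots> \<le> (\<mu>+\<epsilon>) * (\<beta>^2 * real m)" using pe b2 kn by (intro mult_left_mono) auto
      finally show ?thesis using mpos by (simp add: field_simps)
    qed
    have low: "S m / real m \<ge> (\<mu>-\<epsilon>)/\<beta>^2"
    proof (cases "\<mu> - \<epsilon> \<le> 0")
      case True
      then have "(\<mu>-\<epsilon>)/\<beta>^2 \<le> 0" using b2 by (simp add: divide_nonpos_pos)
      moreover have "S m / real m \<ge> 0" using nn mpos by simp
      ultimately show ?thesis by linarith
    next
      case False
      have "S (?k n) / real (?k n) > \<mu> - \<epsilon>" using c0 by linarith
      then have s0: "S (?k n) > (\<mu>-\<epsilon>) * real (?k n)" using knpos by (simp add: field_simps)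
      have "(\<mu>-\<epsilon>) * (real m / \<beta>^2) \<le> (\<mu>-\<epsilon>) * real (?k n)"
      proof (intro mult_left_mono)
        have "real m \<le> \<beta>^2 * real (?k n)" using kn1 kr by linarith
        then show "real m / \<beta>^2 \<le> real (?k n)" using b2 by (simp add: field_simps)
      qed (use False in auto)
      also have "\<dots> \<le> S (?k n)" using s0 by simp
      also have "\<dots> \<le> S m" using kn by (intro mono)
      finally show ?thesis using mpos b2 by (simp add: field_simps)
    qed
    show "S m / real m \<le> (\<mu>+\<epsilon>)*\<beta>^2 \<and> S m / real m \<ge> (\<mu>-\<epsilon>)/\<beta>^2" using up low by simp
  qed
qed


context prob_space begin

lemma trunc_eventually:
  fixes X :: "nat \<Rightarrow> 'a \<Rightarrow> real"
  assumes meas: "\<And>i. X i \<in> borel_measurable M"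
    and dis: "\<And>i. distr M borel (X i) = distr M borel (X 0)"
    and nn: "\<And>i \<omega>. X i \<omega> \<ge> 0"
    and int: "integrable M (X 0)"
  shows "AE \<omega> in M. eventually (\<lambda>k. X k \<omega> = trunc (real (Suc k)) (X k \<omega>)) sequentially"
proof -
  define A where "A k = {\<omega>\<in>space M. X k \<omega> \<in> {real (Suc k)<..}}" for k
  have [measurable]: "A k \<in> sets M" for k unfolding A_def using meas[of k] by measurable
  have pA: "prob (A k) = prob {\<omega>\<in>space M. X 0 \<omega> \<in> {real (Suc k)<..}}" for k
    unfolding A_def by (rule same_distr_prob[OF dis meas meas]) auto
  have ind_int: "integrable M (indicator {\<omega>\<in>space M. X 0 \<omega> \<in> {real (Suc k)<..}} :: 'a \<Rightarrow> real)" for k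
    using meas[of 0] by (intro integrable_real_indicator) (auto simp: emeasure_eq_measure)
  have ps: "(\<Sum>k<n. prob (A k)) \<le> expectation (X 0)" for n
  proof -
    have "(\<Sum>k<n. prob (A k)) = (\<Sum>k<n. expectation (indicator {\<omega>\<in>space M. X 0 \<omega> \<in> {real (Suc k)<..}}))"
      using pA by (simp add: Int_absorb2)
    also have "\<dots> = expectation (\<lambda>\<omega>. \<Sum>k<n. indicator {\<omega>\<in>space M. X 0 \<omega> \<in> {real (Suc k)<..}} \<omega>)"
      using ind_int by (simp add: integral_sum)
    also have "\<dots> \<le> expectation (X 0)"
    proof (rule integral_mono)
      show "integrable M (\<lambda>\<omega>. \<Sum>k<n. indicator {\<omega>\<in>space M. X 0 \<omega> \<in> {real (Suc k)<..}} \<omega> :: real)"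
        using ind_int by simp
      show "integrable M (X 0)" by fact
      fix \<omega> assume \<omega>: "\<omega> \<in> space M"
      have "(\<Sum>k<n. indicator {\<omega>\<in>space M. X 0 \<omega> \<in> {real (Suc k)<..}} \<omega> :: real)
          = (\<Sum>k<n. if X 0 \<omega> > real (Suc k) then 1 else 0)"
        using \<omega> by (intro sum.cong) (auto simp: indicator_def)
      also have "\<dots> \<le> min (real n) (X 0 \<omega>)" by (rule tail_count_le[OF nn])
      also have "\<dots> \<le> X 0 \<omega>" by simp
      finally show "(\<Sum>k<n. indicator {\<omega>\<in>space M. X 0 \<omega> \<in> {real (Suc k)<..}} \<omega> :: real) \<le> X 0 \<omega>" .
    qed
    finally show ?thesis .
  qed
  have sum: "summable (\<lambda>k. measure M (A k))"
    by (rule summableI_nonneg_bounded[where x="expectation (X 0)"]) (use ps in auto)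
  have "AE \<omega> in M. eventually (\<lambda>k. \<omega> \<in> space M - A k) sequentially"
    by (rule borel_cantelli_AE1) (auto simp: sum emeasure_eq_measure)
  then show ?thesis
  proof (rule AE_mp[OF _ AE_I2[OF impI]])
    fix \<omega> assume \<omega>: "\<omega> \<in> space M" and ev: "eventually (\<lambda>k. \<omega> \<in> space M - A k) sequentially"
    show "eventually (\<lambda>k. X k \<omega> = trunc (real (Suc k)) (X k \<omega>)) sequentially"
      using ev by eventually_elim (use \<omega> in \<open>auto simp: A_def trunc_def\<close>)
  qed
qed


lemma trunc_bounds: "x \<ge> 0 \<Longrightarrow> c \<ge> 0 \<Longrightarrow> 0 \<le> trunc c x \<and> trunc c x \<le> c \<and> trunc c x \<le> x"
  by (auto simp: trunc_def)

lemma int_trunc_sq: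
  fixes Z :: "'a \<Rightarrow> real"
  assumes "Z \<in> borel_measurable M" "\<And>\<omega>. Z \<omega> \<ge> 0" "c \<ge> 0"
  shows "integrable M (\<lambda>\<omega>. (trunc c (Z \<omega>))^2)"
proof (rule integrable_const_bound[where B="c^2"])
  show "AE x in M. norm ((trunc c (Z x))^2) \<le> c^2"
    using trunc_bounds[OF assms(2) assms(3)] by (auto intro!: power_mono)
  show "(\<lambda>\<omega>. (trunc c (Z \<omega>))^2) \<in> borel_measurable M" using assms(1) by measurable
qed

lemma sub_dev:
  fixes X :: "nat \<Rightarrow> 'a \<Rightarrow> real"
  assumes ind: "\<And>i j. i \<noteq> j \<Longrightarrow> indep_var borel (X i) borel (X j)"
    and meas: "\<And>i. X i \<in> borel_measurable M"
    and dis: "\<And>i. distr M borel (X i) = distr M borel (X 0)"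
    and nn: "\<And>i \<omega>. X i \<omega> \<ge> 0"
    and int: "integrable M (X 0)"
    and \<beta>: "\<beta> > 1"
  shows "AE \<omega> in M. (\<lambda>n. (\<Sum>i<kseq \<beta> n. (trunc (real (Suc i)) (X i \<omega>) - expectation (\<lambda>\<omega>. trunc (real (Suc i)) (X i \<omega>)))) / real (kseq \<beta> n)) \<longlonglongrightarrow> 0"
proof -
  define Y where "Y i \<omega> = trunc (real (Suc i)) (X i \<omega>)" for i \<omega>
  have measY[measurable]: "Y i \<in> borel_measurable M" for i unfolding Y_def using meas[of i] by measurable
  have bndY: "0 \<le> Y i \<omega> \<and> Y i \<omega> \<le> real (Suc i)" for i \<omega>
    unfolding Y_def using trunc_bounds[OF nn[of i \<omega>], of "real (Suc i)"] by simp
  have intY: "integrable M (Y i)" for i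
    by (rule integrable_const_bound[where B="real (Suc i)"]) (use bndY in auto)
  have intY2: "integrable M (\<lambda>\<omega>. (Y i \<omega>)^2)" for i
    unfolding Y_def by (rule int_trunc_sq) (use meas nn in auto)
  have indY: "indep_var borel (Y i) borel (Y j)" if "i \<noteq> j" for i j
  proof -
    have "indep_var borel (trunc (real (Suc i)) \<circ> X i) borel (trunc (real (Suc j)) \<circ> X j)"
      by (rule indep_var_compose[OF ind[OF that]]) auto
    then show ?thesis by (simp add: Y_def[abs_def] comp_def)
  qed
  define h where "h n x = (\<Sum>i<kseq \<beta> n. (trunc (real (Suc i)) x)^2) / (real (kseq \<beta> n))^2" for n x
  have hm[measurable]: "h n \<in> borel_measurable borel" for n unfolding h_def by measurable
  have int_h: "integrable M (\<lambda>\<omega>. h n (X 0 \<omega>))" for n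
  proof -
    have "integrable M (\<lambda>\<omega>. \<Sum>i<kseq \<beta> n. (trunc (real (Suc i)) (X 0 \<omega>))^2)"
      by (intro Bochner_Integration.integrable_sum int_trunc_sq) (use meas nn in auto)
    then show ?thesis unfolding h_def by (rule integrable_divide)
  qed
  have h_nn: "h n x \<ge> 0" for n x unfolding h_def by (intro divide_nonneg_nonneg sum_nonneg) auto
  define C where "C = 2 * \<beta> / (\<beta> - 1)"
  have sum_h: "summable (\<lambda>n. expectation (\<lambda>\<omega>. h n (X 0 \<omega>)))"
  proof (rule summableI_nonneg_bounded[where x="expectation (\<lambda>\<omega>. C * X 0 \<omega>)"])
    show "0 \<le> expectation (\<lambda>\<omega>. h n (X 0 \<omega>))" for n by (intro integral_nonneg_AE) (auto simp: h_nn)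
    fix m
    have "(\<Sum>n<m. expectation (\<lambda>\<omega>. h n (X 0 \<omega>))) = expectation (\<lambda>\<omega>. \<Sum>n<m. h n (X 0 \<omega>))"
      using int_h by (simp add: integral_sum)
    also have "\<dots> \<le> expectation (\<lambda>\<omega>. C * X 0 \<omega>)"
    proof (rule integral_mono)
      show "integrable M (\<lambda>\<omega>. \<Sum>n<m. h n (X 0 \<omega>))" using int_h by simp
      show "integrable M (\<lambda>\<omega>. C * X 0 \<omega>)" using int by simp
      fix \<omega> show "(\<Sum>n<m. h n (X 0 \<omega>)) \<le> C * X 0 \<omega>"
        unfolding h_def C_def by (rule var_pointwise[OF \<beta> nn])
    qed
    finally show "(\<Sum>n<m. expectation (\<lambda>\<omega>. h n (X 0 \<omega>))) \<le> expectation (\<lambda>\<omega>. C * X 0 \<omega>)" .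
  qed
  define A where "A \<epsilon> n = {\<omega>\<in>space M. \<epsilon> * real (kseq \<beta> n) \<le> \<bar>(\<Sum>i<kseq \<beta> n. Y i \<omega>) - (\<Sum>i<kseq \<beta> n. expectation (Y i))\<bar>}" for \<epsilon> n
  have Ameas[measurable]: "A \<epsilon> n \<in> sets M" for \<epsilon> n unfolding A_def by measurable
  have probA: "prob (A \<epsilon> n) \<le> expectation (\<lambda>\<omega>. h n (X 0 \<omega>)) / \<epsilon>^2" if \<epsilon>: "\<epsilon> > 0" for \<epsilon> n
  proof -
    define k where "k = kseq \<beta> n"
    have k1: "real k \<ge> 1" unfolding k_def using kseq_ge1[of \<beta> n] \<beta> by simp
    define f where "f \<omega> = (\<Sum>i<k. Y i \<omega>)" for \<omega>
    have fm[measurable]: "f \<in> borel_measurable M" unfolding f_def by measurable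
    have fb: "0 \<le> f \<omega> \<and> f \<omega> \<le> real k * real k" for \<omega>
    proof -
      have "f \<omega> \<le> (\<Sum>i<k. real k)" unfolding f_def
      proof (intro sum_mono)
        fix i assume "i \<in> {..<k}" then show "Y i \<omega> \<le> real k" using bndY[of i \<omega>] by simp
      qed
      moreover have "f \<omega> \<ge> 0" unfolding f_def using bndY by (intro sum_nonneg) auto
      ultimately show ?thesis by simp
    qed
    have intf2: "integrable M (\<lambda>\<omega>. f \<omega> ^ 2)"
    proof (rule integrable_const_bound[where B="(real k * real k)^2"])
      show "AE x in M. norm (f x ^ 2) \<le> (real k * real k)^2" using fb by (auto intro!: power_mono)
    qed simp
    have Ef: "expectation f = (\<Sum>i<k. expectation (Y i))" unfolding f_def using intY by (simp add: integral_sum)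
    have vf: "variance f = (\<Sum>i<k. variance (Y i))"
      unfolding f_def
    proof (rule var_sum[where B="real k"])
      fix i \<omega> assume "i \<in> {..<k}" then show "\<bar>Y i \<omega>\<bar> \<le> real k" using bndY[of i \<omega>] by simp
    qed (use indY in auto)
    have vY: "variance (Y i) \<le> expectation (\<lambda>\<omega>. (trunc (real (Suc i)) (X 0 \<omega>))^2)" for i
    proof -
      have "variance (Y i) = expectation (\<lambda>\<omega>. (Y i \<omega>)^2) - (expectation (Y i))^2"
        by (rule variance_eq[OF intY intY2])
      also have "\<dots> \<le> expectation (\<lambda>\<omega>. (Y i \<omega>)^2)" by simp
      also have "\<dots> = expectation (\<lambda>\<omega>. (trunc (real (Suc i)) (X 0 \<omega>))^2)"
        unfolding Y_def by (rule same_distr_integral[OF dis meas meas, where f="\<lambda>x. (trunc (real (Suc i)) x)^2"]) simp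
      finally show ?thesis .
    qed
    have "variance f \<le> (\<Sum>i<k. expectation (\<lambda>\<omega>. (trunc (real (Suc i)) (X 0 \<omega>))^2))"
      unfolding vf by (intro sum_mono vY)
    also have "\<dots> = expectation (\<lambda>\<omega>. (\<Sum>i<k. (trunc (real (Suc i)) (X 0 \<omega>))^2))"
      by (rule Bochner_Integration.integral_sum[symmetric]) (auto intro!: int_trunc_sq meas nn)
    also have "\<dots> = (real k)^2 * expectation (\<lambda>\<omega>. h n (X 0 \<omega>))"
      unfolding h_def k_def[symmetric] using k1 by simp
    finally have vfb: "variance f \<le> (real k)^2 * expectation (\<lambda>\<omega>. h n (X 0 \<omega>))" .
    have "prob (A \<epsilon> n) = prob {\<omega>\<in>space M. \<bar>f \<omega> - expectation f\<bar> \<ge> \<epsilon> * real k}"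
      unfolding A_def Ef f_def k_def by (rule arg_cong[where f=prob]) auto
    also have "\<dots> \<le> variance f / (\<epsilon> * real k)^2"
      by (rule Chebyshev_inequality[OF fm intf2]) (use \<epsilon> k1 in simp)
    also have "\<dots> \<le> (real k)^2 * expectation (\<lambda>\<omega>. h n (X 0 \<omega>)) / (\<epsilon> * real k)^2"
      by (rule divide_right_mono[OF vfb]) simp
    also have "\<dots> = expectation (\<lambda>\<omega>. h n (X 0 \<omega>)) / \<epsilon>^2"
      using k1 \<epsilon> by (simp add: power_mult_distrib)
    finally show ?thesis .
  qed
  have AEe: "AE \<omega> in M. eventually (\<lambda>n. \<omega> \<in> space M - A \<epsilon> n) sequentially" if \<epsilon>: "\<epsilon> > 0" for \<epsilon>
  proof (rule borel_cantelli_AE1)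
    show "summable (\<lambda>n. measure M (A \<epsilon> n))"
    proof (rule summable_comparison_test'[where N=0])
      show "summable (\<lambda>n. expectation (\<lambda>\<omega>. h n (X 0 \<omega>)) / \<epsilon>^2)" by (rule summable_divide[OF sum_h])
      fix n show "norm (measure M (A \<epsilon> n)) \<le> expectation (\<lambda>\<omega>. h n (X 0 \<omega>)) / \<epsilon>^2"
        using probA[OF \<epsilon>] by simp
    qed
  qed (auto simp: emeasure_eq_measure)
  have "AE \<omega> in M. \<forall>m::nat. eventually (\<lambda>n. \<omega> \<in> space M - A (1 / real (Suc m)) n) sequentially"
    unfolding AE_all_countable by (intro allI AEe) simp
  then show ?thesis
  proof (rule AE_mp[OF _ AE_I2[OF impI]])
    fix \<omega> assume \<omega>: "\<omega> \<in> space M"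
      and ev: "\<forall>m::nat. eventually (\<lambda>n. \<omega> \<in> space M - A (1 / real (Suc m)) n) sequentially"
    show "(\<lambda>n. (\<Sum>i<kseq \<beta> n. (trunc (real (Suc i)) (X i \<omega>) - expectation (\<lambda>\<omega>. trunc (real (Suc i)) (X i \<omega>)))) / real (kseq \<beta> n)) \<longlonglongrightarrow> 0"
    proof (rule LIMSEQ_I)
      fix r :: real assume r: "r > 0"
      obtain m where m: "1 / real (Suc m) < r"
        using reals_Archimedean[OF r] by (auto simp: inverse_eq_divide)
      obtain n0 where n0: "\<And>n. n \<ge> n0 \<Longrightarrow> \<omega> \<in> space M - A (1 / real (Suc m)) n"
        using ev[rule_format, of m] unfolding eventually_sequentially by blast
      show "\<exists>no. \<forall>n\<ge>no. norm ((\<Sum>i<kseq \<beta> n. (trunc (real (Suc i)) (X i \<omega>) - expectation (\<lambda>\<omega>. trunc (real (Suc i)) (X i \<omega>)))) / real (kseq \<beta> n) - 0) < r"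
      proof (intro exI allI impI)
        fix n assume "n \<ge> n0"
        then have "\<omega> \<notin> A (1 / real (Suc m)) n" using n0 by auto
        then have lt: "\<bar>(\<Sum>i<kseq \<beta> n. Y i \<omega>) - (\<Sum>i<kseq \<beta> n. expectation (Y i))\<bar> < 1 / real (Suc m) * real (kseq \<beta> n)"
          using \<omega> unfolding A_def by auto
        have k1: "real (kseq \<beta> n) \<ge> 1" using kseq_ge1[of \<beta> n] \<beta> by simp
        have eq: "(\<Sum>i<kseq \<beta> n. (trunc (real (Suc i)) (X i \<omega>) - expectation (\<lambda>\<omega>. trunc (real (Suc i)) (X i \<omega>))))
            = (\<Sum>i<kseq \<beta> n. Y i \<omega>) - (\<Sum>i<kseq \<beta> n. expectation (Y i))"
          unfolding Y_def by (simp add: sum_subtractf)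
        have "\<bar>((\<Sum>i<kseq \<beta> n. Y i \<omega>) - (\<Sum>i<kseq \<beta> n. expectation (Y i))) / real (kseq \<beta> n)\<bar> < 1 / real (Suc m)"
          using lt k1 by (simp add: abs_div field_simps)
        then show "norm ((\<Sum>i<kseq \<beta> n. (trunc (real (Suc i)) (X i \<omega>) - expectation (\<lambda>\<omega>. trunc (real (Suc i)) (X i \<omega>)))) / real (kseq \<beta> n) - 0) < r"
          using m unfolding eq by simp
      qed
    qed
  qed
qed

end


lemma squeeze_beta:
  fixes x :: "nat \<Rightarrow> real"
  assumes \<mu>: "\<mu> \<ge> 0" and r: "r > 0"
    and H: "\<And>j \<epsilon>. \<epsilon> > 0 \<Longrightarrow> \<exists>m0. \<forall>m\<ge>m0. x m \<le> (\<mu>+\<epsilon>)*(1 + 1/real (Suc j))^2 \<and> x m \<ge> (\<mu>-\<epsilon>)/(1 + 1/real (Suc j))^2"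
  shows "\<exists>m0. \<forall>m\<ge>m0. \<bar>x m - \<mu>\<bar> < r"
proof -
  define \<delta> where "\<delta> = r / (2*(\<mu>+r))"
  have \<delta>0: "\<delta> > 0" unfolding \<delta>_def using \<mu> r by simp
  have \<delta>1: "\<delta> \<le> 1/2" unfolding \<delta>_def using \<mu> r by (simp add: field_simps)
  have \<delta>\<mu>: "\<delta> * \<mu> \<le> r/2"
  proof -
    have "\<delta> * (\<mu> + r) = r/2" unfolding \<delta>_def using \<mu> r by (simp add: field_simps)
    then show ?thesis using \<delta>0 r by (simp add: algebra_simps) (smt (verit) mult_pos_pos)
  qed
  obtain j where j: "inverse (real (Suc j)) < \<delta>/3" using reals_Archimedean[of "\<delta>/3"] \<delta>0 by auto
  define t where "t = 1 / real (Suc j)"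
  have t0: "t > 0" and t1: "t \<le> 1" unfolding t_def by auto
  have t\<delta>: "3 * t < \<delta>" using j unfolding t_def by (simp add: inverse_eq_divide)
  define b where "b = (1 + t)^2"
  have b1: "b \<ge> 1" unfolding b_def using t0 by simp
  have b\<delta>: "b \<le> 1 + \<delta>"
  proof -
    have "b = 1 + 2*t + t*t" unfolding b_def by (simp add: power2_eq_square algebra_simps)
    also have "\<dots> \<le> 1 + 3 * t" using t0 t1 by (simp add: mult_left_le)
    finally show ?thesis using t\<delta> by linarith
  qed
  obtain m0 where m0: "\<And>m. m \<ge> m0 \<Longrightarrow> x m \<le> (\<mu>+r/4)*b \<and> x m \<ge> (\<mu>-r/4)/b"
    using H[of "r/4" j] r unfolding b_def t_def by auto
  show ?thesis
  proof (intro exI allI impI)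
    fix m assume "m \<ge> m0"
    then have up: "x m \<le> (\<mu>+r/4)*b" and lo: "x m \<ge> (\<mu>-r/4)/b" using m0 by auto
    have "(\<mu>+r/4)*b \<le> (\<mu>+r/4)*(1+\<delta>)" using b\<delta> \<mu> r by (intro mult_left_mono) auto
    also have "\<dots> = \<mu> + r/4 + \<delta>*\<mu> + \<delta>*(r/4)" by (simp add: field_simps)
    also have "\<dots> < \<mu> + r"
    proof -
      have "\<delta>*(r/4) \<le> (1/2)*(r/4)" using \<delta>1 r by (intro mult_right_mono) auto
      then show ?thesis using \<delta>\<mu> r by linarith
    qed
    finally have A: "x m < \<mu> + r" using up by linarith
    have B: "x m > \<mu> - r"
    proof (cases "\<mu> - r/4 \<ge> 0")
      case True
      have "(\<mu>-r/4)/b \<ge> (\<mu>-r/4)/(1+\<delta>)" using True b1 b\<delta> by (intro divide_left_mono) auto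
      moreover have "(\<mu>-r/4)/(1+\<delta>) \<ge> (\<mu>-r/4)*(1-\<delta>)"
      proof -
        have "(1-\<delta>)*(1+\<delta>) \<le> 1" by (simp add: algebra_simps)
        then have "(\<mu>-r/4)*((1-\<delta>)*(1+\<delta>)) \<le> (\<mu>-r/4)" using True by (simp add: mult_left_le)
        then show ?thesis using \<delta>0 by (simp add: field_simps)
      qed
      moreover have "(\<mu>-r/4)*(1-\<delta>) = \<mu> - r/4 - \<delta>*\<mu> + \<delta>*(r/4)" by (simp add: field_simps)
      moreover have "\<delta>*(r/4) \<ge> 0" using \<delta>0 r by simp
      ultimately show ?thesis using lo \<delta>\<mu> r by linarith
    next
      case False
      have "(\<mu>-r/4)/b \<ge> (\<mu>-r/4)"
      proof -
        have "(\<mu>-r/4) * b \<le> (\<mu>-r/4) * 1" using False b1 by (intro mult_left_mono_neg) auto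
        then show ?thesis using b1 by (simp add: pos_le_divide_eq)
      qed
      then show ?thesis using lo r by linarith
    qed
    show "\<bar>x m - \<mu>\<bar> < r" using A B by linarith
  qed
qed

lemma distr_compose_eq:
  fixes X Y :: "'a \<Rightarrow> real"
  assumes "distr M borel X = distr M borel Y" "X \<in> borel_measurable M" "Y \<in> borel_measurable M"
    "f \<in> borel_measurable borel"
  shows "distr M borel (\<lambda>\<omega>. f (X \<omega>)) = distr M borel (\<lambda>\<omega>. f (Y \<omega>))"
proof -
  have "distr (distr M borel X) borel f = distr M borel (f \<circ> X)" by (rule distr_distr) (use assms in auto)
  moreover have "distr (distr M borel Y) borel f = distr M borel (f \<circ> Y)" by (rule distr_distr) (use assms in auto)
  ultimately show ?thesis using assms(1) by (simp add: comp_def)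
qed

context prob_space begin

lemma slln_nonneg:
  fixes X :: "nat \<Rightarrow> 'a \<Rightarrow> real"
  assumes ind: "\<And>i j. i \<noteq> j \<Longrightarrow> indep_var borel (X i) borel (X j)"
    and meas: "\<And>i. X i \<in> borel_measurable M"
    and dis: "\<And>i. distr M borel (X i) = distr M borel (X 0)"
    and nn: "\<And>i \<omega>. X i \<omega> \<ge> 0"
    and int: "integrable M (X 0)"
  shows "AE \<omega> in M. (\<lambda>n. (\<Sum>i<n. X i \<omega>) / real n) \<longlonglongrightarrow> expectation (X 0)"
proof -
  define \<mu> where "\<mu> = expectation (X 0)"
  have \<mu>0: "\<mu> \<ge> 0" unfolding \<mu>_def using nn by (simp add: integral_nonneg_AE)
  define Y where "Y i \<omega> = trunc (real (Suc i)) (X i \<omega>)" for i \<omega>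
  have EY: "expectation (Y i) = expectation (\<lambda>\<omega>. trunc (real (Suc i)) (X 0 \<omega>))" for i
    unfolding Y_def by (rule same_distr_integral[OF dis meas meas]) simp
  have EYlim: "(\<lambda>i. expectation (Y i)) \<longlonglongrightarrow> \<mu>"
    unfolding EY \<mu>_def
  proof (rule integral_dominated_convergence[where w="X 0"])
    show "X 0 \<in> borel_measurable M" by (rule meas)
    show "(\<lambda>\<omega>. trunc (real (Suc i)) (X 0 \<omega>)) \<in> borel_measurable M" for i using meas[of 0] by measurable
    show "integrable M (X 0)" by (rule int)
    show "AE \<omega> in M. norm (trunc (real (Suc i)) (X 0 \<omega>)) \<le> X 0 \<omega>" for i
      using trunc_bounds[OF nn[of 0]] by auto
    show "AE \<omega> in M. (\<lambda>i. trunc (real (Suc i)) (X 0 \<omega>)) \<longlonglongrightarrow> X 0 \<omega>"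
    proof (rule AE_I2)
      fix \<omega>
      obtain N :: nat where N: "X 0 \<omega> \<le> real N" using real_arch_simple by blast
      have "eventually (\<lambda>i. X 0 \<omega> = trunc (real (Suc i)) (X 0 \<omega>)) sequentially"
        unfolding eventually_sequentially using N by (intro exI[of _ N]) (auto simp: trunc_def)
      then show "(\<lambda>i. trunc (real (Suc i)) (X 0 \<omega>)) \<longlonglongrightarrow> X 0 \<omega>"
        by (rule Lim_transform_eventually[OF tendsto_const])
    qed
  qed
  have ces: "(\<lambda>n. (\<Sum>i<n. expectation (Y i)) / real n) \<longlonglongrightarrow> \<mu>" by (rule cesaro[OF EYlim])
  define \<beta> where "\<beta> j = 1 + 1 / real (Suc j)" for j
  have \<beta>1: "\<beta> j > 1" for j unfolding \<beta>_def by simp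
  have sub: "AE \<omega> in M. (\<lambda>n. (\<Sum>i<kseq (\<beta> j) n. X i \<omega>) / real (kseq (\<beta> j) n)) \<longlonglongrightarrow> \<mu>" for j
  proof -
    let ?k = "kseq (\<beta> j)"
    have kt: "filterlim ?k at_top sequentially" by (rule kseq_tendsto[OF \<beta>1])
    have ces2: "(\<lambda>n. (\<Sum>i<?k n. expectation (Y i)) / real (?k n)) \<longlonglongrightarrow> \<mu>"
      by (rule filterlim_compose[OF ces kt])
    have kinv: "(\<lambda>n. inverse (real (?k n))) \<longlonglongrightarrow> 0"
      by (rule tendsto_inverse_0_at_top) (rule filterlim_compose[OF filterlim_real_sequentially kt])
    have d1: "AE \<omega> in M. (\<lambda>n. (\<Sum>i<?k n. (trunc (real (Suc i)) (X i \<omega>) - expectation (\<lambda>\<omega>. trunc (real (Suc i)) (X i \<omega>)))) / real (?k n)) \<longlonglongrightarrow> 0"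
      using sub_dev[of X "\<beta> j"] ind meas dis nn int \<beta>1[of j] by blast
    have d2: "AE \<omega> in M. eventually (\<lambda>k. X k \<omega> = trunc (real (Suc k)) (X k \<omega>)) sequentially"
      using trunc_eventually[of X] meas dis nn int by blast
    show ?thesis
      using d1 d2
    proof (eventually_elim)
      fix \<omega>
      assume dev: "(\<lambda>n. (\<Sum>i<?k n. (trunc (real (Suc i)) (X i \<omega>) - expectation (\<lambda>\<omega>. trunc (real (Suc i)) (X i \<omega>)))) / real (?k n)) \<longlonglongrightarrow> 0"
        and ev: "eventually (\<lambda>k. X k \<omega> = trunc (real (Suc k)) (X k \<omega>)) sequentially"
      obtain K where K: "\<And>i. i \<ge> K \<Longrightarrow> X i \<omega> = Y i \<omega>"
        using ev unfolding eventually_sequentially Y_def by blast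
      define c where "c = (\<Sum>i<K. X i \<omega> - Y i \<omega>)"
      have dev': "(\<lambda>n. (\<Sum>i<?k n. Y i \<omega>) / real (?k n) - (\<Sum>i<?k n. expectation (Y i)) / real (?k n)) \<longlonglongrightarrow> 0"
        using dev unfolding Y_def by (simp add: sum_subtractf diff_divide_distrib)
      have t1: "(\<lambda>n. (\<Sum>i<?k n. Y i \<omega>) / real (?k n)) \<longlonglongrightarrow> \<mu>"
        using tendsto_add[OF dev' ces2] by simp
      have t2: "(\<lambda>n. c * inverse (real (?k n))) \<longlonglongrightarrow> 0"
        using tendsto_mult[OF tendsto_const[of c] kinv] by simp
      have t3: "(\<lambda>n. (\<Sum>i<?k n. Y i \<omega>) / real (?k n) + c * inverse (real (?k n))) \<longlonglongrightarrow> \<mu>"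
        using tendsto_add[OF t1 t2] by simp
      have evk: "eventually (\<lambda>n. ?k n \<ge> K) sequentially"
        using kt unfolding filterlim_at_top by blast
      show "(\<lambda>n. (\<Sum>i<?k n. X i \<omega>) / real (?k n)) \<longlonglongrightarrow> \<mu>"
      proof (rule Lim_transform_eventually[OF t3])
        show "eventually (\<lambda>n. (\<Sum>i<?k n. Y i \<omega>) / real (?k n) + c * inverse (real (?k n)) = (\<Sum>i<?k n. X i \<omega>) / real (?k n)) sequentially"
          using evk
        proof eventually_elim
          fix n assume Kn: "K \<le> ?k n"
          have "(\<Sum>i<?k n. X i \<omega> - Y i \<omega>) = (\<Sum>i<K. X i \<omega> - Y i \<omega>) + (\<Sum>i\<in>{K..<?k n}. X i \<omega> - Y i \<omega>)"
            using Kn by (simp add: lessThan_atLeast0 sum.atLeastLessThan_concat)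
          also have "(\<Sum>i\<in>{K..<?k n}. X i \<omega> - Y i \<omega>) = 0" using K by (intro sum.neutral) auto
          finally have "(\<Sum>i<?k n. X i \<omega>) = (\<Sum>i<?k n. Y i \<omega>) + c" unfolding c_def by (simp add: sum_subtractf)
          then show "(\<Sum>i<?k n. Y i \<omega>) / real (?k n) + c * inverse (real (?k n)) = (\<Sum>i<?k n. X i \<omega>) / real (?k n)"
            by (simp add: divide_inverse distrib_right)
        qed
      qed
    qed
  qed
  have "AE \<omega> in M. \<forall>j. (\<lambda>n. (\<Sum>i<kseq (\<beta> j) n. X i \<omega>) / real (kseq (\<beta> j) n)) \<longlonglongrightarrow> \<mu>"
    unfolding AE_all_countable using sub by blast
  then show ?thesis unfolding \<mu>_def[symmetric]
  proof (rule AE_mp[OF _ AE_I2[OF impI]])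
    fix \<omega> assume allj: "\<forall>j. (\<lambda>n. (\<Sum>i<kseq (\<beta> j) n. X i \<omega>) / real (kseq (\<beta> j) n)) \<longlonglongrightarrow> \<mu>"
    define S where "S m = (\<Sum>i<m. X i \<omega>)" for m
    have Smono: "S m \<le> S n" if "m \<le> n" for m n
      unfolding S_def using that nn by (intro sum_mono2) auto
    have Snn: "S m \<ge> 0" for m unfolding S_def using nn by (intro sum_nonneg) auto
    show "(\<lambda>n. (\<Sum>i<n. X i \<omega>) / real n) \<longlonglongrightarrow> \<mu>"
    proof (rule LIMSEQ_I)
      fix r :: real assume r: "r > 0"
      have "\<exists>m0. \<forall>m\<ge>m0. \<bar>S m / real m - \<mu>\<bar> < r"
      proof (rule squeeze_beta[OF \<mu>0 r])
        fix j :: nat and \<epsilon> :: real assume "\<epsilon> > 0"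
        then have "\<exists>m0. \<forall>m\<ge>m0. S m / real m \<le> (\<mu>+\<epsilon>)*(\<beta> j)^2 \<and> S m / real m \<ge> (\<mu>-\<epsilon>)/(\<beta> j)^2"
          by (intro interp[OF Smono Snn \<beta>1[of j]]) (use allj in \<open>auto simp: S_def\<close>)
        then show "\<exists>m0. \<forall>m\<ge>m0. S m / real m \<le> (\<mu>+\<epsilon>)*(1 + 1/real (Suc j))^2 \<and> S m / real m \<ge> (\<mu>-\<epsilon>)/(1 + 1/real (Suc j))^2"
          unfolding \<beta>_def .
      qed
      then show "\<exists>no. \<forall>n\<ge>no. norm ((\<Sum>i<n. X i \<omega>) / real n - \<mu>) < r" unfolding S_def by simp
    qed
  qed
qed

end


context prob_space begin

lemma slln:
  fixes X :: "nat \<Rightarrow> 'a \<Rightarrow> real"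
  assumes ind: "\<And>i j. i \<noteq> j \<Longrightarrow> indep_var borel (X i) borel (X j)"
    and meas: "\<And>i. X i \<in> borel_measurable M"
    and dis: "\<And>i. distr M borel (X i) = distr M borel (X 0)"
    and int: "integrable M (X 0)"
  shows "AE \<omega> in M. (\<lambda>n. (\<Sum>i<n. X i \<omega>) / real n) \<longlonglongrightarrow> expectation (X 0)"
proof -
  define Xp where "Xp i \<omega> = max 0 (X i \<omega>)" for i \<omega>
  define Xn where "Xn i \<omega> = max 0 (- X i \<omega>)" for i \<omega>
  have mp: "\<And>i. Xp i \<in> borel_measurable M" unfolding Xp_def using meas by measurable
  have mn: "\<And>i. Xn i \<in> borel_measurable M" unfolding Xn_def using meas by measurable
  have ip: "indep_var borel (Xp i) borel (Xp j)" if "i \<noteq> j" for i j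
  proof -
    have "indep_var borel ((\<lambda>x. max 0 x) \<circ> X i) borel ((\<lambda>x. max 0 x) \<circ> X j)"
      by (rule indep_var_compose[OF ind[OF that]]) auto
    then show ?thesis by (simp add: Xp_def[abs_def] comp_def)
  qed
  have in_: "indep_var borel (Xn i) borel (Xn j)" if "i \<noteq> j" for i j
  proof -
    have "indep_var borel ((\<lambda>x. max 0 (-x)) \<circ> X i) borel ((\<lambda>x. max 0 (-x)) \<circ> X j)"
      by (rule indep_var_compose[OF ind[OF that]]) auto
    then show ?thesis by (simp add: Xn_def[abs_def] comp_def)
  qed
  have dp: "distr M borel (Xp i) = distr M borel (Xp 0)" for i
    unfolding Xp_def by (rule distr_compose_eq[OF dis meas meas]) simp
  have dn: "distr M borel (Xn i) = distr M borel (Xn 0)" for i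
    unfolding Xn_def by (rule distr_compose_eq[OF dis meas meas]) simp
  have intp: "integrable M (Xp 0)" unfolding Xp_def using int by (intro Bochner_Integration.integrable_max) auto
  have intn: "integrable M (Xn 0)" unfolding Xn_def using int by (intro Bochner_Integration.integrable_max) auto
  have Lp: "AE \<omega> in M. (\<lambda>n. (\<Sum>i<n. Xp i \<omega>) / real n) \<longlonglongrightarrow> expectation (Xp 0)"
    using slln_nonneg[of Xp] ip mp dp intp by (auto simp: Xp_def)
  have Ln: "AE \<omega> in M. (\<lambda>n. (\<Sum>i<n. Xn i \<omega>) / real n) \<longlonglongrightarrow> expectation (Xn 0)"
    using slln_nonneg[of Xn] in_ mn dn intn by (auto simp: Xn_def)
  have XE: "expectation (X 0) = expectation (Xp 0) - expectation (Xn 0)"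
  proof -
    have "X 0 = (\<lambda>\<omega>. Xp 0 \<omega> - Xn 0 \<omega>)" by (auto simp: Xp_def Xn_def fun_eq_iff max_def)
    then show ?thesis using intp intn by (metis Bochner_Integration.integral_diff)
  qed
  show ?thesis using Lp Ln
  proof eventually_elim
    fix \<omega>
    assume a: "(\<lambda>n. (\<Sum>i<n. Xp i \<omega>) / real n) \<longlonglongrightarrow> expectation (Xp 0)"
       and b: "(\<lambda>n. (\<Sum>i<n. Xn i \<omega>) / real n) \<longlonglongrightarrow> expectation (Xn 0)"
    have "(\<lambda>n. (\<Sum>i<n. Xp i \<omega>) / real n - (\<Sum>i<n. Xn i \<omega>) / real n) \<longlonglongrightarrow> expectation (X 0)"
      unfolding XE by (rule tendsto_diff[OF a b])
    moreover have "(\<Sum>i<n. Xp i \<omega>) / real n - (\<Sum>i<n. Xn i \<omega>) / real n = (\<Sum>i<n. X i \<omega>) / real n" for n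
    proof -
      have "(\<Sum>i<n. Xp i \<omega>) - (\<Sum>i<n. Xn i \<omega>) = (\<Sum>i<n. X i \<omega>)"
        by (simp add: sum_subtractf[symmetric] Xp_def Xn_def max_def) (intro sum.cong, auto)
      then show ?thesis by (simp add: diff_divide_distrib[symmetric])
    qed
    ultimately show "(\<lambda>n. (\<Sum>i<n. X i \<omega>) / real n) \<longlonglongrightarrow> expectation (X 0)" by simp
  qed
qed

lemma pair_indep:
  fixes Z :: "'i \<Rightarrow> 'a \<Rightarrow> real"
  assumes ind: "indep_vars (\<lambda>_. borel) Z UNIV"
    and disj: "{a1, b1} \<inter> {a2, b2} = {}"
    and G1: "case_prod G1 \<in> borel_measurable (borel \<Otimes>\<^sub>M borel)"
    and G2: "case_prod G2 \<in> borel_measurable (borel \<Otimes>\<^sub>M borel)"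
  shows "indep_var borel (\<lambda>\<omega>. G1 (Z a1 \<omega>) (Z b1 \<omega>)) borel (\<lambda>\<omega>. G2 (Z a2 \<omega>) (Z b2 \<omega>))"
proof -
  have iv: "indep_var (PiM {a1, b1} (\<lambda>_. borel)) (\<lambda>\<omega>. restrict (\<lambda>i. Z i \<omega>) {a1, b1})
                      (PiM {a2, b2} (\<lambda>_. borel)) (\<lambda>\<omega>. restrict (\<lambda>i. Z i \<omega>) {a2, b2})"
    by (rule indep_var_restrict[OF ind disj]) auto
  have m1: "(\<lambda>f. G1 (f a1) (f b1)) \<in> borel_measurable (PiM {a1, b1} (\<lambda>_. borel))"
  proof -
    have "(\<lambda>f. (f a1, f b1)) \<in> measurable (PiM {a1, b1} (\<lambda>_. borel)) (borel \<Otimes>\<^sub>M borel)"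
      by (intro measurable_Pair measurable_component_singleton) auto
    from measurable_comp[OF this G1] show ?thesis by (simp add: comp_def)
  qed
  have m2: "(\<lambda>f. G2 (f a2) (f b2)) \<in> borel_measurable (PiM {a2, b2} (\<lambda>_. borel))"
  proof -
    have "(\<lambda>f. (f a2, f b2)) \<in> measurable (PiM {a2, b2} (\<lambda>_. borel)) (borel \<Otimes>\<^sub>M borel)"
      by (intro measurable_Pair measurable_component_singleton) auto
    from measurable_comp[OF this G2] show ?thesis by (simp add: comp_def)
  qed
  from indep_var_compose[OF iv m1 m2] show ?thesis by (simp add: comp_def)
qed

lemma pair_distr:
  fixes Z :: "'i \<Rightarrow> 'a \<Rightarrow> real"
  assumes ind: "indep_vars (\<lambda>_. borel) Z UNIV"
    and ne: "a1 \<noteq> b1" "a2 \<noteq> b2"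
    and da: "distr M borel (Z a1) = distr M borel (Z a2)"
    and db: "distr M borel (Z b1) = distr M borel (Z b2)"
    and G: "case_prod G \<in> borel_measurable (borel \<Otimes>\<^sub>M borel)"
  shows "distr M borel (\<lambda>\<omega>. G (Z a1 \<omega>) (Z b1 \<omega>)) = distr M borel (\<lambda>\<omega>. G (Z a2 \<omega>) (Z b2 \<omega>))"
proof -
  have fst_m: "case_prod (\<lambda>x y. x) \<in> borel_measurable (borel \<Otimes>\<^sub>M borel)" by simp
  have snd_m: "case_prod (\<lambda>x y. y) \<in> borel_measurable (borel \<Otimes>\<^sub>M borel)" by simp
  have rv: "Z i \<in> borel_measurable M" for i using ind unfolding indep_vars_def by auto
  have iv1: "indep_var borel (Z a1) borel (Z b1)"
    using pair_indep[OF ind _ fst_m fst_m, of a1 a1 b1 b1] ne by simp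
  have iv2: "indep_var borel (Z a2) borel (Z b2)"
    using pair_indep[OF ind _ fst_m fst_m, of a2 a2 b2 b2] ne by simp
  have j1: "distr M (borel \<Otimes>\<^sub>M borel) (\<lambda>x. (Z a1 x, Z b1 x)) = distr M borel (Z a1) \<Otimes>\<^sub>M distr M borel (Z b1)"
    using iv1 unfolding indep_var_distribution_eq by simp
  have j2: "distr M (borel \<Otimes>\<^sub>M borel) (\<lambda>x. (Z a2 x, Z b2 x)) = distr M borel (Z a2) \<Otimes>\<^sub>M distr M borel (Z b2)"
    using iv2 unfolding indep_var_distribution_eq by simp
  have pm: "(\<lambda>x. (Z a x, Z b x)) \<in> measurable M (borel \<Otimes>\<^sub>M borel)" for a b
    using rv by (intro measurable_Pair) auto
  have "distr M borel (\<lambda>\<omega>. G (Z a1 \<omega>) (Z b1 \<omega>)) = distr (distr M (borel \<Otimes>\<^sub>M borel) (\<lambda>x. (Z a1 x, Z b1 x))) borel (case_prod G)"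
    by (subst distr_distr[OF G pm]) (simp add: comp_def)
  also have "\<dots> = distr (distr M (borel \<Otimes>\<^sub>M borel) (\<lambda>x. (Z a2 x, Z b2 x))) borel (case_prod G)"
    unfolding j1 j2 da db ..
  also have "\<dots> = distr M borel (\<lambda>\<omega>. G (Z a2 \<omega>) (Z b2 \<omega>))"
    by (subst distr_distr[OF G pm]) (simp add: comp_def)
  finally show ?thesis .
qed

end


lemma resid_key:
  fixes P r q T :: nat
  assumes "P > 0" "r < P"
  shows "q < (T + (P - 1 - r)) div P \<longleftrightarrow> P*q + r < T"
proof -
  have "q < (T + (P - 1 - r)) div P \<longleftrightarrow> Suc q \<le> (T + (P - 1 - r)) div P" by (simp only: Suc_le_eq)
  also have "\<dots> \<longleftrightarrow> Suc q * P \<le> T + (P - 1 - r)" using assms(1) by (rule less_eq_div_iff_mult_less_eq)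
  also have "\<dots> \<longleftrightarrow> P*q + r < T" using assms by (simp add: algebra_simps, linarith)
  finally show ?thesis .
qed

lemma resid_sum:
  fixes g :: "nat \<Rightarrow> real"
  assumes P: "P > 0"
  shows "(\<Sum>t<T. g t) = (\<Sum>r<P. \<Sum>q<(T + (P - 1 - r)) div P. g (P*q + r))"
proof -
  define I where "I = Sigma {..<P} (\<lambda>r. {..<(T + (P - 1 - r)) div P})"
  have "(\<Sum>r<P. \<Sum>q<(T + (P - 1 - r)) div P. g (P*q + r)) = (\<Sum>(r,q)\<in>I. g (P*q + r))"
    unfolding I_def by (rule sum.Sigma) auto
  also have "\<dots> = (\<Sum>t<T. g t)"
  proof -
    have bij: "bij_betw (\<lambda>(r, q). P * q + r) I {..<T}"
    proof (rule bij_betwI')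
      fix x y assume "x \<in> I" "y \<in> I"
      then show "((case x of (r, q) \<Rightarrow> P * q + r) = (case y of (r, q) \<Rightarrow> P * q + r)) = (x = y)"
        unfolding I_def
        by (cases x, cases y, auto) (metis add.commute mod_mult_self2 mod_less mult.commute,
            metis add.commute div_mult_self2 div_less mult.commute add_0 P gr_implies_not0 mod_less mod_mult_self2)
    next
      fix x assume "x \<in> I" then show "(case x of (r, q) \<Rightarrow> P * q + r) \<in> {..<T}"
        unfolding I_def using resid_key[OF P] by auto
    next
      fix t assume t: "t \<in> {..<T}"
      have "t mod P < P" using P by simp
      moreover have "P * (t div P) + t mod P < T" using t by simp
      ultimately have "(t mod P, t div P) \<in> I" unfolding I_def using resid_key[OF P] by auto
      then show "\<exists>x\<in>I. t = (case x of (r, q) \<Rightarrow> P * q + r)" by (intro bexI[of _ "(t mod P, t div P)"]) auto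
    qed
    have "(\<Sum>x\<in>I. g ((\<lambda>(r, q). P * q + r) x)) = sum g {..<T}" by (rule sum.reindex_bij_betw[OF bij])
    moreover have "(\<Sum>(r,q)\<in>I. g (P*q + r)) = (\<Sum>x\<in>I. g ((\<lambda>(r, q). P * q + r) x))"
      by (intro sum.cong) auto
    ultimately show ?thesis by simp
  qed
  finally show ?thesis by simp
qed

lemma cnt_tendsto:
  assumes P: "P > 0" and r: "r < P"
  shows "(\<lambda>T. real ((T + (P - 1 - r)) div P) / real T) \<longlonglongrightarrow> 1 / real P"
proof -
  define c where "c = P - 1 - r"
  have c: "c < P" unfolding c_def using P by simp
  define cnt where "cnt T = (T + c) div P" for T
  have b1: "cnt T * P \<le> T + c" for T unfolding cnt_def by (rule div_times_less_eq_dividend)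
  have b2: "T + c < (cnt T + 1) * P" for T
  proof -
    have e: "(T + c) div P * P + (T + c) mod P = T + c" by (rule div_mult_mod_eq)
    have m: "(T + c) mod P < P" using P by simp
    have "((T + c) div P + 1) * P = (T + c) div P * P + P" by simp
    then show ?thesis using e m unfolding cnt_def by linarith
  qed
  have bound: "\<bar>real (cnt T) / real T - 1 / real P\<bar> \<le> 1 / real T" if T: "T > 0" for T
  proof -
    have r1: "real (cnt T) * real P \<le> real T + real c" using b1[of T] by (metis of_nat_add of_nat_le_iff of_nat_mult)
    have r2: "real T + real c < (real (cnt T) + 1) * real P" using b2[of T] by (metis of_nat_1 of_nat_add of_nat_less_iff of_nat_mult)
    have rc: "real c < real P" using c by simp
    have "\<bar>real (cnt T) * real P - real T\<bar> \<le> real P" using r1 r2 rc by (simp add: algebra_simps abs_le_iff)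
    moreover have "real (cnt T) / real T - 1 / real P = (real (cnt T) * real P - real T) / (real P * real T)"
      using T P by (simp add: field_simps)
    ultimately have "\<bar>real (cnt T) / real T - 1 / real P\<bar> = \<bar>real (cnt T) * real P - real T\<bar> / (real P * real T)"
      using T P by (simp add: abs_div)
    also have "\<dots> \<le> real P / (real P * real T)"
      using \<open>\<bar>real (cnt T) * real P - real T\<bar> \<le> real P\<close> T P by (intro divide_right_mono) auto
    also have "\<dots> = 1 / real T" using P by simp
    finally show ?thesis .
  qed
  have "(\<lambda>T. real (cnt T) / real T - 1 / real P) \<longlonglongrightarrow> 0"
  proof (rule Lim_null_comparison[OF _ lim_1_over_n])
    show "\<forall>\<^sub>F T in sequentially. norm (real (cnt T) / real T - 1 / real P) \<le> 1 / real T"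
      unfolding eventually_sequentially using bound by (intro exI[of _ 1]) auto
  qed
  then have "(\<lambda>T. real (cnt T) / real T - 1 / real P + 1 / real P) \<longlonglongrightarrow> 0 + 1 / real P"
    by (intro tendsto_add tendsto_const)
  then show ?thesis unfolding cnt_def c_def by simp
qed

lemma cnt_filterlim:
  assumes P: "P > 0"
  shows "filterlim (\<lambda>T. (T + c) div P) at_top sequentially"
  unfolding filterlim_at_top eventually_sequentially
proof (intro allI exI[of _ "_ * P"] impI)
  fix Z T :: nat assume "Z * P \<le> T"
  then have "Z * P \<le> T + c" by simp
  then show "Z \<le> (T + c) div P" using P by (simp add: less_eq_div_iff_mult_less_eq)
qed

lemma resid_avg:
  fixes g :: "nat \<Rightarrow> real"
  assumes P: "P > 0" and lim: "\<And>r. r < P \<Longrightarrow> (\<lambda>n. (\<Sum>q<n. g (P*q + r)) / real n) \<longlonglongrightarrow> L r"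
  shows "(\<lambda>T. (\<Sum>t<T. g t) / real T) \<longlonglongrightarrow> (\<Sum>r<P. L r) / real P"
proof -
  define cnt where "cnt r T = (T + (P - 1 - r)) div P" for r T
  have eq: "(\<Sum>t<T. g t) / real T = (\<Sum>r<P. ((\<Sum>q<cnt r T. g (P*q + r)) / real (cnt r T)) * (real (cnt r T) / real T))" for T
  proof -
    have "(\<Sum>t<T. g t) / real T = (\<Sum>r<P. (\<Sum>q<cnt r T. g (P*q + r)) / real T)"
      unfolding resid_sum[OF P, of g T] cnt_def by (simp add: sum_divide_distrib)
    also have "\<dots> = (\<Sum>r<P. ((\<Sum>q<cnt r T. g (P*q + r)) / real (cnt r T)) * (real (cnt r T) / real T))"
      by (intro sum.cong refl) (auto simp: field_simps)
    finally show ?thesis .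
  qed
  have "(\<lambda>T. (\<Sum>r<P. ((\<Sum>q<cnt r T. g (P*q + r)) / real (cnt r T)) * (real (cnt r T) / real T))) \<longlonglongrightarrow> (\<Sum>r<P. L r * (1 / real P))"
  proof (intro tendsto_sum tendsto_mult)
    fix r assume r: "r \<in> {..<P}"
    show "(\<lambda>T. (\<Sum>q<cnt r T. g (P*q + r)) / real (cnt r T)) \<longlonglongrightarrow> L r"
      unfolding cnt_def by (rule filterlim_compose[OF lim cnt_filterlim[OF P]]) (use r in auto)
    show "(\<lambda>T. real (cnt r T) / real T) \<longlonglongrightarrow> 1 / real P"
      unfolding cnt_def by (rule cnt_tendsto[OF P]) (use r in auto)
  qed
  then show ?thesis unfolding eq by (simp add: sum_divide_distrib)
qed

context prob_space begin

lemma per_slln: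
  fixes Z :: "'i \<Rightarrow> 'a \<Rightarrow> real" and \<phi> :: "nat \<Rightarrow> real"
  assumes ind: "indep_vars (\<lambda>_. borel) Z UNIV"
    and P: "P > 0"
    and ne: "\<And>t. a t \<noteq> b t"
    and disj: "\<And>t t'. t \<noteq> t' \<Longrightarrow> t mod P = t' mod P \<Longrightarrow> {a t, b t} \<inter> {a t', b t'} = {}"
    and da: "\<And>t. distr M borel (Z (a t)) = distr M borel (Z (a 0))"
    and db: "\<And>t. distr M borel (Z (b t)) = distr M borel (Z (b 0))"
    and G: "case_prod G \<in> borel_measurable (borel \<Otimes>\<^sub>M borel)"
    and int: "integrable M (\<lambda>\<omega>. G (Z (a 0) \<omega>) (Z (b 0) \<omega>))"
  shows "AE \<omega> in M. (\<lambda>T. (\<Sum>t<T. \<phi> (t mod P) * G (Z (a t) \<omega>) (Z (b t) \<omega>)) / real T)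
           \<longlonglongrightarrow> (\<Sum>r<P. \<phi> r) / real P * expectation (\<lambda>\<omega>. G (Z (a 0) \<omega>) (Z (b 0) \<omega>))"
proof -
  define m where "m = expectation (\<lambda>\<omega>. G (Z (a 0) \<omega>) (Z (b 0) \<omega>))"
  define X where "X t \<omega> = G (Z (a t) \<omega>) (Z (b t) \<omega>)" for t \<omega>
  have rv: "Z i \<in> borel_measurable M" for i using ind unfolding indep_vars_def by auto
  have Xm: "X t \<in> borel_measurable M" for t
  proof -
    have "(\<lambda>x. (Z (a t) x, Z (b t) x)) \<in> measurable M (borel \<Otimes>\<^sub>M borel)" using rv by (intro measurable_Pair) auto
    from measurable_comp[OF this G] show ?thesis by (simp add: X_def[abs_def] comp_def)
  qed
  have Xd: "distr M borel (X t) = distr M borel (X 0)" for t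
    unfolding X_def by (rule pair_distr[OF ind ne ne da db G])
  have Xint: "integrable M (X t)" for t
  proof -
    have "integrable M (\<lambda>\<omega>. id (X t \<omega>))" by (rule same_distr_integrable[OF Xd Xm Xm]) (use int in \<open>simp_all add: X_def\<close>)
    then show ?thesis by simp
  qed
  have XE: "expectation (X t) = m" for t
    using same_distr_integral[OF Xd Xm Xm, of id] by (simp add: X_def[abs_def] m_def)
  have r_lim: "AE \<omega> in M. (\<lambda>n. (\<Sum>q<n. X (P*q + r) \<omega>) / real n) \<longlonglongrightarrow> m" if r: "r < P" for r
  proof -
    have "AE \<omega> in M. (\<lambda>n. (\<Sum>q<n. X (P*q + r) \<omega>) / real n) \<longlonglongrightarrow> expectation (X (P*0 + r))"
    proof (rule slln)
      fix i j :: nat assume "i \<noteq> j"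
      then have "P*i + r \<noteq> P*j + r" using P by simp
      moreover have "(P*i + r) mod P = (P*j + r) mod P" by simp
      ultimately show "indep_var borel (X (P*i + r)) borel (X (P*j + r))"
        unfolding X_def by (intro pair_indep[OF ind disj G G])
    next
      show "distr M borel (X (P*i + r)) = distr M borel (X (P*0 + r))" for i using Xd[of "P*i+r"] Xd[of r] by simp
    qed (use Xm Xint in auto)
    then show ?thesis using XE by simp
  qed
  have "AE \<omega> in M. \<forall>r\<in>{..<P}. (\<lambda>n. (\<Sum>q<n. X (P*q + r) \<omega>) / real n) \<longlonglongrightarrow> m"
    using r_lim by (subst AE_ball_countable) auto
  then show ?thesis unfolding m_def[symmetric]
  proof eventually_elim
    fix \<omega> assume H: "\<forall>r\<in>{..<P}. (\<lambda>n. (\<Sum>q<n. X (P*q + r) \<omega>) / real n) \<longlonglongrightarrow> m"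
    have "(\<lambda>T. (\<Sum>t<T. \<phi> (t mod P) * X t \<omega>) / real T) \<longlonglongrightarrow> (\<Sum>r<P. \<phi> r * m) / real P"
    proof (rule resid_avg[OF P])
      fix r assume r: "r < P"
      have lim1: "(\<lambda>n. \<phi> r * ((\<Sum>q<n. X (P*q + r) \<omega>) / real n)) \<longlonglongrightarrow> \<phi> r * m"
        using H r by (intro tendsto_mult tendsto_const) auto
      have eqn: "(\<Sum>q<n. \<phi> ((P*q + r) mod P) * X (P*q + r) \<omega>) / real n = \<phi> r * ((\<Sum>q<n. X (P*q + r) \<omega>) / real n)" for n
      proof -
        have "(P*q + r) mod P = r" for q using r by simp
        then show ?thesis by (simp add: sum_distrib_left)
      qed
      show "(\<lambda>n. (\<Sum>q<n. \<phi> ((P*q + r) mod P) * X (P*q + r) \<omega>) / real n) \<longlonglongrightarrow> \<phi> r * m"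
        unfolding eqn by (rule lim1)
    qed
    then show "(\<lambda>T. (\<Sum>t<T. \<phi> (t mod P) * G (Z (a t) \<omega>) (Z (b t) \<omega>)) / real T) \<longlonglongrightarrow> (\<Sum>r<P. \<phi> r) / real P * m"
      by (simp add: X_def sum_distrib_right[symmetric])
  qed
qed

end


lemma row_sum_aux:
  fixes a e :: real and y :: "nat \<Rightarrow> real"
  assumes "p < N"
  shows "(\<Sum>q<N. (if p = q then a else e) * y q) = (a - e) * y p + e * (\<Sum>q<N. y q)"
proof -
  have "(\<Sum>q<N. (if p = q then a else e) * y q) = (\<Sum>q<N. e * y q + (if p = q then (a - e) * y q else 0))"
    by (intro sum.cong) (auto simp: algebra_simps)
  also have "\<dots> = e * (\<Sum>q<N. y q) + (a - e) * y p"
    using assms by (simp add: sum.distrib sum_distrib_left)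
  finally show ?thesis by simp
qed

lemma Umat_mult:
  fixes a e :: real
  assumes "v \<in> carrier_vec N" "p < N"
  shows "(mat N N (\<lambda>(p, q). if p = q then a else e) *\<^sub>v v) $ p = (a - e) * v $ p + e * (\<Sum>q<N. v $ q)"
proof -
  have "(mat N N (\<lambda>(p, q). if p = q then a else e) *\<^sub>v v) $ p = (\<Sum>q<N. (if p = q then a else e) * v $ q)"
    using assms by (simp add: scalar_prod_def lessThan_atLeast0)
  also have "\<dots> = (a - e) * v $ p + e * (\<Sum>q<N. v $ q)" by (rule row_sum_aux[OF assms(2)])
  finally show ?thesis .
qed

lemma Umat_solve:
  fixes a e :: real and N :: nat and d :: "nat \<Rightarrow> real"
  assumes ae: "a - e \<noteq> 0" and s: "a + (real N - 1) * e \<noteq> 0"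
  shows "\<exists>B. mat_inverse (mat N N (\<lambda>(p, q). if p = q then a else e)) = Some B \<and>
     B *\<^sub>v vec N d = vec N (\<lambda>p. (d p - e * (\<Sum>q<N. d q) / (a + (real N - 1) * e)) / (a - e))"
proof -
  define U where "U = mat N N (\<lambda>(p, q). if p = q then a else e)"
  define sN where "sN = a + (real N - 1) * e"
  define x where "x = vec N (\<lambda>p. (d p - e * (\<Sum>q<N. d q) / sN) / (a - e))"
  have U: "U \<in> carrier_mat N N" unfolding U_def by simp
  have x: "x \<in> carrier_vec N" unfolding x_def by simp
  have sumx: "(\<Sum>q<N. x $ q) = (\<Sum>q<N. d q) / sN"
  proof -
    have "(\<Sum>q<N. x $ q) = (\<Sum>q<N. (d q - e * (\<Sum>q<N. d q) / sN) / (a - e))"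
      unfolding x_def by (intro sum.cong) auto
    also have "\<dots> = ((\<Sum>q<N. d q) - real N * (e * (\<Sum>q<N. d q) / sN)) / (a - e)"
      by (simp add: sum_divide_distrib[symmetric] sum_subtractf)
    also have "\<dots> = (\<Sum>q<N. d q) / sN"
    proof -
      have h: "sN - real N * e = a - e" unfolding sN_def by (simp add: algebra_simps)
      have s': "sN \<noteq> 0" using s unfolding sN_def .
      have "(\<Sum>q<N. d q) - real N * (e * (\<Sum>q<N. d q) / sN) = (\<Sum>q<N. d q) * (sN - real N * e) / sN"
        using s' by (simp add: field_simps)
      also have "\<dots> = (\<Sum>q<N. d q) * (a - e) / sN" unfolding h ..
      finally show ?thesis using ae by simp
    qed
    finally show ?thesis .
  qed
  have Ux: "U *\<^sub>v x = vec N d"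
  proof (rule eq_vecI)
    fix p assume "p < dim_vec (vec N d)"
    then have p: "p < N" by simp
    have "(U *\<^sub>v x) $ p = (a - e) * x $ p + e * (\<Sum>q<N. x $ q)" unfolding U_def by (rule Umat_mult[OF x p])
    also have "\<dots> = d p" unfolding sumx using p ae by (simp add: x_def field_simps)
    finally show "(U *\<^sub>v x) $ p = vec N d $ p" using p by simp
  qed (simp add: U_def)
  have ker: "v = 0\<^sub>v N" if v: "v \<in> carrier_vec N" "U *\<^sub>v v = 0\<^sub>v N" for v
  proof -
    have row: "(a - e) * v $ p + e * (\<Sum>q<N. v $ q) = 0" if "p < N" for p
      using Umat_mult[OF v(1) that, of a e] v(2) that unfolding U_def by simp
    have "(\<Sum>p<N. (a - e) * v $ p + e * (\<Sum>q<N. v $ q)) = 0" using row by simp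
    then have "(a - e) * (\<Sum>q<N. v $ q) + real N * e * (\<Sum>q<N. v $ q) = 0"
      by (simp add: sum.distrib sum_distrib_left mult.assoc)
    then have "sN * (\<Sum>q<N. v $ q) = 0" unfolding sN_def by (simp add: algebra_simps)
    then have s0: "(\<Sum>q<N. v $ q) = 0" using s unfolding sN_def by simp
    show ?thesis
    proof (rule eq_vecI)
      fix p assume "p < dim_vec (0\<^sub>v N :: real vec)"
      then have p: "p < N" by simp
      have "(a - e) * v $ p = 0" using row[OF p] s0 by simp
      then show "v $ p = 0\<^sub>v N $ p" using ae p by simp
    qed (use v in simp)
  qed
  have unit: "U \<in> Units (ring_mat TYPE(real) N ())"
    by (rule det_non_zero_imp_unit[OF U]) (use ker det_0_iff_vec_prod_zero_field[OF U] in blast)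
  obtain B where B: "mat_inverse U = Some B"
    using mat_inverse(1)[OF U, of "()"] unit by (cases "mat_inverse U") auto
  have BU: "B * U = 1\<^sub>m N" and Bc: "B \<in> carrier_mat N N" using mat_inverse(2)[OF U B] by auto
  have "B *\<^sub>v vec N d = B *\<^sub>v (U *\<^sub>v x)" unfolding Ux ..
  also have "\<dots> = (B * U) *\<^sub>v x" using Bc U x by simp
  also have "\<dots> = x" unfolding BU using x by simp
  finally show ?thesis using B unfolding U_def x_def sN_def by blast
qed


lemma sa_step:
  fixes sg :: "real \<Rightarrow> real"
  assumes sg_neg': "\<forall>z<0. sg z = -1" and sg_pos': "\<forall>z>0. sg z = 1"
    and sg_0: "sg 0 \<in> {-1, 0, 1}"
    and xd: "\<bar>x' - L\<bar> < \<delta>" and a: "0 < a" "a < \<delta>"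
  shows "\<bar>h + a * sg (x' - h) - L\<bar> \<le> max \<bar>h - L\<bar> (2*\<delta>)"
    and "h - L > 2*\<delta> \<Longrightarrow> h + a * sg (x' - h) = h - a"
    and "h - L < -2*\<delta> \<Longrightarrow> h + a * sg (x' - h) = h + a"
proof -
  have sg_neg: "sg z = -1" if "z < 0" for z using sg_neg' that by auto
  have sg_pos: "sg z = 1" if "z > 0" for z using sg_pos' that by auto
  have xd2: "x' - L < \<delta>" "L - x' < \<delta>" using xd by (simp_all add: abs_less_iff)
  have m1: "\<bar>h - L\<bar> \<le> max \<bar>h - L\<bar> (2*\<delta>)" "2*\<delta> \<le> max \<bar>h - L\<bar> (2*\<delta>)" by simp_all
  have m2: "h - L \<le> \<bar>h - L\<bar>" "L - h \<le> \<bar>h - L\<bar>" by simp_all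
  show "\<bar>h + a * sg (x' - h) - L\<bar> \<le> max \<bar>h - L\<bar> (2*\<delta>)"
  proof (cases "x' - h" "0::real" rule: linorder_cases)
    case less
    then have "sg (x' - h) = -1" by (rule sg_neg)
    then have e: "h + a * sg (x' - h) = h - a" by simp
    show ?thesis unfolding e abs_le_iff using less xd2 a m1 m2 by linarith
  next
    case greater
    then have "sg (x' - h) = 1" by (rule sg_pos)
    then have e: "h + a * sg (x' - h) = h + a" by simp
    show ?thesis unfolding e abs_le_iff using greater xd2 a m1 m2 by linarith
  next
    case equal
    then have xh: "x' = h" by simp
    have "sg (x' - h) = -1 \<or> sg (x' - h) = 0 \<or> sg (x' - h) = 1" using sg_0 xh by auto
    then show ?thesis
    proof (elim disjE)
      assume "sg (x' - h) = -1" then have e: "h + a * sg (x' - h) = h - a" by simp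
      show ?thesis unfolding e abs_le_iff using xh xd2 a m1 m2 by linarith
    next
      assume "sg (x' - h) = 0" then have e: "h + a * sg (x' - h) = h" by simp
      show ?thesis unfolding e using m1 by linarith
    next
      assume "sg (x' - h) = 1" then have e: "h + a * sg (x' - h) = h + a" by simp
      show ?thesis unfolding e abs_le_iff using xh xd2 a m1 m2 by linarith
    qed
  qed
  show "h - L > 2*\<delta> \<Longrightarrow> h + a * sg (x' - h) = h - a"
  proof -
    assume "h - L > 2*\<delta>"
    then have "x' - h < 0" using xd a by linarith
    then show ?thesis using sg_neg by simp
  qed
  show "h - L < -2*\<delta> \<Longrightarrow> h + a * sg (x' - h) = h + a"
  proof -
    assume "h - L < -2*\<delta>"
    then have "x' - h > 0" using xd a by linarith
    then show ?thesis using sg_pos by simp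
  qed
qed

lemma sa_rec_conv:
  fixes x \<alpha> :: "nat \<Rightarrow> real" and sg :: "real \<Rightarrow> real"
  assumes x: "x \<longlonglongrightarrow> L" and \<alpha>pos: "\<And>j. j \<ge> 1 \<Longrightarrow> \<alpha> j > 0" and \<alpha>0: "\<alpha> \<longlonglongrightarrow> 0"
    and \<alpha>div: "\<not> summable \<alpha>"
    and sg_neg: "\<And>z. z < 0 \<Longrightarrow> sg z = -1" and sg_pos: "\<And>z. z > 0 \<Longrightarrow> sg z = 1"
    and sg_0: "sg 0 \<in> {-1, 0, 1}"
  shows "(\<lambda>k. sa_rec sg \<alpha> x k) \<longlonglongrightarrow> L"
proof (rule LIMSEQ_I)
  fix r :: real assume r: "r > 0"
  define \<delta> where "\<delta> = r / 3"
  have \<delta>: "\<delta> > 0" unfolding \<delta>_def using r by simp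
  define h where "h k = sa_rec sg \<alpha> x k" for k
  have hS: "h (Suc k) = h k + \<alpha> (Suc k) * sg (x (Suc k) - h k)" for k unfolding h_def by simp
  obtain K1 where K1: "\<And>k. k \<ge> K1 \<Longrightarrow> norm (x k - L) < \<delta>" using LIMSEQ_D[OF x \<delta>] by auto
  obtain K2 where K2: "\<And>k. k \<ge> K2 \<Longrightarrow> norm (\<alpha> k - 0) < \<delta>" using LIMSEQ_D[OF \<alpha>0 \<delta>] by auto
  define K where "K = max K1 K2"
  have good: "\<bar>x (Suc k) - L\<bar> < \<delta> \<and> 0 < \<alpha> (Suc k) \<and> \<alpha> (Suc k) < \<delta>" if "k \<ge> K" for k
    using K1[of "Suc k"] K2[of "Suc k"] \<alpha>pos[of "Suc k"] that unfolding K_def by auto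
  have sgn: "\<forall>z<0. sg z = -1" "\<forall>z>0. sg z = 1" using sg_neg sg_pos by auto
  note st = sa_step[OF sgn(1) sgn(2) sg_0]
  have stay: "\<bar>h (k + m) - L\<bar> \<le> 2*\<delta>" if "k \<ge> K" "\<bar>h k - L\<bar> \<le> 2*\<delta>" for k m
  proof (induction m)
    case 0 then show ?case using that by simp
  next
    case (Suc m)
    have g: "\<bar>x (Suc (k+m)) - L\<bar> < \<delta>" "0 < \<alpha> (Suc (k+m))" "\<alpha> (Suc (k+m)) < \<delta>" using good[of "k+m"] that by auto
    have "\<bar>h (Suc (k + m)) - L\<bar> \<le> max \<bar>h (k+m) - L\<bar> (2*\<delta>)" unfolding hS by (rule st(1)[OF g])
    then show ?case using Suc.IH by simp
  qed
  have reach: "\<exists>k\<ge>K. \<bar>h k - L\<bar> \<le> 2*\<delta>"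
  proof (rule ccontr)
    assume "\<not> ?thesis"
    then have far: "\<And>k. k \<ge> K \<Longrightarrow> \<bar>h k - L\<bar> > 2*\<delta>" by force
    define s where "s m = (\<Sum>i<m. \<alpha> (i + Suc K))" for m
    have snn: "\<alpha> (i + Suc K) \<ge> 0" for i using \<alpha>pos[of "i + Suc K"] by simp
    have "summable (\<lambda>i. \<alpha> (i + Suc K))"
    proof (cases "h K - L > 2*\<delta>")
      case True
      have ind: "h (K + m) - L > 2*\<delta> \<and> h (K + m) = h K - s m" for m
      proof (induction m)
        case 0 then show ?case using True by (simp add: s_def)
      next
        case (Suc m)
        have g: "\<bar>x (Suc (K+m)) - L\<bar> < \<delta>" "0 < \<alpha> (Suc (K+m))" "\<alpha> (Suc (K+m)) < \<delta>" using good[of "K+m"] by auto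
        have e: "h (Suc (K+m)) = h (K+m) - \<alpha> (Suc (K+m))" unfolding hS by (rule st(2)[OF g]) (use Suc.IH in simp)
        have "\<bar>h (Suc (K+m)) - L\<bar> > 2*\<delta>" using far[of "Suc (K+m)"] by simp
        then have "h (Suc (K+m)) - L > 2*\<delta>" using e Suc.IH g by linarith
        moreover have "h (Suc (K+m)) = h K - s (Suc m)" using e Suc.IH by (simp add: s_def add.commute)
        ultimately show ?case by simp
      qed
      show ?thesis
      proof (rule summableI_nonneg_bounded[where x="h K - L"])
        fix m show "(\<Sum>i<m. \<alpha> (i + Suc K)) \<le> h K - L" using ind[of m] \<delta> unfolding s_def by linarith
      qed (rule snn)
    next
      case False
      then have neg: "h K - L < -2*\<delta>" using far[of K] by simp
      have ind: "h (K + m) - L < -2*\<delta> \<and> h (K + m) = h K + s m" for m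
      proof (induction m)
        case 0 then show ?case using neg by (simp add: s_def)
      next
        case (Suc m)
        have g: "\<bar>x (Suc (K+m)) - L\<bar> < \<delta>" "0 < \<alpha> (Suc (K+m))" "\<alpha> (Suc (K+m)) < \<delta>" using good[of "K+m"] by auto
        have e: "h (Suc (K+m)) = h (K+m) + \<alpha> (Suc (K+m))" unfolding hS by (rule st(3)[OF g]) (use Suc.IH in simp)
        have "\<bar>h (Suc (K+m)) - L\<bar> > 2*\<delta>" using far[of "Suc (K+m)"] by simp
        then have "h (Suc (K+m)) - L < -2*\<delta>" using e Suc.IH g by linarith
        moreover have "h (Suc (K+m)) = h K + s (Suc m)" using e Suc.IH by (simp add: s_def add.commute)
        ultimately show ?case by simp
      qed
      show ?thesis
      proof (rule summableI_nonneg_bounded[where x="L - h K"])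
        fix m show "(\<Sum>i<m. \<alpha> (i + Suc K)) \<le> L - h K" using ind[of m] \<delta> unfolding s_def by linarith
      qed (rule snn)
    qed
    then have "summable \<alpha>" by (rule summable_iff_shift[THEN iffD1])
    then show False using \<alpha>div by simp
  qed
  then obtain K' where K': "K' \<ge> K" "\<bar>h K' - L\<bar> \<le> 2*\<delta>" by blast
  show "\<exists>no. \<forall>n\<ge>no. norm (sa_rec sg \<alpha> x n - L) < r"
  proof (intro exI allI impI)
    fix n assume "n \<ge> K'"
    then have "\<bar>h (K' + (n - K')) - L\<bar> \<le> 2*\<delta>" by (intro stay K')
    then have "\<bar>h n - L\<bar> \<le> 2*\<delta>" using \<open>n \<ge> K'\<close> by simp
    then show "norm (sa_rec sg \<alpha> x n - L) < r" using r unfolding h_def \<delta>_def by simp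
  qed
qed


lemma enum_prefix:
  fixes S :: "nat set" assumes S: "infinite S"
  shows "S \<inter> {..<enumerate S i} = enumerate S ` {..<i}"
proof
  show "S \<inter> {..<enumerate S i} \<subseteq> enumerate S ` {..<i}"
  proof
    fix t assume t: "t \<in> S \<inter> {..<enumerate S i}"
    then obtain j where j: "enumerate S j = t" using enumerate_Ex[OF S] by blast
    then have "j < i" using t S by auto
    then show "t \<in> enumerate S ` {..<i}" using j by auto
  qed
  show "enumerate S ` {..<i} \<subseteq> S \<inter> {..<enumerate S i}"
    using S by (auto intro: enumerate_in_set)
qed

lemma enum_sum:
  fixes S :: "nat set" and h :: "nat \<Rightarrow> real" assumes S: "infinite S"
  shows "(\<Sum>j<i. h (enumerate S j)) = (\<Sum>t<enumerate S i. if t \<in> S then h t else 0)"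
proof -
  have "(\<Sum>t<enumerate S i. if t \<in> S then h t else 0) = (\<Sum>t\<in>{..<enumerate S i} \<inter> S. h t)"
    by (simp add: sum.inter_restrict)
  also have "{..<enumerate S i} \<inter> S = enumerate S ` {..<i}" using enum_prefix[OF S] by blast
  also have "(\<Sum>t\<in>enumerate S ` {..<i}. h t) = (\<Sum>j<i. h (enumerate S j))"
    using inj_enumerate[OF S] by (simp add: sum.reindex inj_on_subset)
  finally show ?thesis by simp
qed

lemma enum_card:
  fixes S :: "nat set" assumes S: "infinite S"
  shows "(\<Sum>t<enumerate S i. if t \<in> S then 1 else 0 :: real) = real i"
  using enum_sum[OF S, of "\<lambda>_. 1" i] by simp

lemma enum_cut:
  fixes S :: "nat set" assumes S: "infinite S"
  shows "\<exists>m. S \<inter> {..<T} = S \<inter> {..<enumerate S m}"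
proof -
  have ex: "\<exists>m. T \<le> enumerate S m" using le_enumerate[OF S, of T] by blast
  define m where "m = (LEAST m. T \<le> enumerate S m)"
  have m1: "T \<le> enumerate S m" unfolding m_def using ex by (rule LeastI_ex)
  have m2: "\<not> T \<le> enumerate S j" if "j < m" for j using not_less_Least[OF that[unfolded m_def]] .
  have "S \<inter> {..<T} = S \<inter> {..<enumerate S m}"
  proof
    show "S \<inter> {..<T} \<subseteq> S \<inter> {..<enumerate S m}" using m1 by auto
    show "S \<inter> {..<enumerate S m} \<subseteq> S \<inter> {..<T}"
    proof
      fix t assume t: "t \<in> S \<inter> {..<enumerate S m}"
      then obtain j where j: "enumerate S j = t" using enumerate_Ex[OF S] by blast
      then have "j < m" using t S by auto
      then have "\<not> T \<le> enumerate S j" by (rule m2)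
      then show "t \<in> S \<inter> {..<T}" using j t by auto
    qed
  qed
  then show ?thesis by blast
qed

lemma enum_card_sum:
  fixes S :: "nat set" and h :: "nat \<Rightarrow> real" assumes S: "infinite S"
  shows "(\<Sum>j<card (S \<inter> {..<T}). h (enumerate S j)) = (\<Sum>t<T. if t \<in> S then h t else 0)"
proof -
  obtain m where m: "S \<inter> {..<T} = S \<inter> {..<enumerate S m}" using enum_cut[OF S] by blast
  have c: "card (S \<inter> {..<T}) = m"
  proof -
    have "S \<inter> {..<enumerate S m} = enumerate S ` {..<m}" by (rule enum_prefix[OF S])
    then have "card (S \<inter> {..<enumerate S m}) = card {..<m}"
      using inj_enumerate[OF S] by (simp add: card_image inj_on_subset)
    then show ?thesis using m by simp
  qed
  have "(\<Sum>t<T. if t \<in> S then h t else 0) = (\<Sum>t\<in>{..<T} \<inter> S. h t)" by (simp add: sum.inter_restrict)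
  also have "{..<T} \<inter> S = {..<enumerate S m} \<inter> S" using m by blast
  also have "(\<Sum>t\<in>{..<enumerate S m} \<inter> S. h t) = (\<Sum>t<enumerate S m. if t \<in> S then h t else 0)"
    by (simp add: sum.inter_restrict)
  also have "\<dots> = (\<Sum>j<m. h (enumerate S j))" by (rule enum_sum[OF S, symmetric])
  finally show ?thesis using c by simp
qed

lemma card_as_sum:
  fixes S :: "nat set"
  shows "real (card (S \<inter> {..<T})) = (\<Sum>t<T. if t \<in> S then 1 else 0)"
proof -
  have "(\<Sum>t\<in>{..<T} \<inter> S. (1::real)) = (\<Sum>t<T. if t \<in> S then 1 else 0)" by (rule sum.inter_restrict) simp
  then show ?thesis by (simp add: Int_commute)
qed


lemma Gm1: fixes c :: real shows "case_prod (\<lambda>(x::real) (y::real). if x > c then 1 else (0::real)) \<in> borel_measurable (borel \<Otimes>\<^sub>M borel)"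
  by measurable
lemma Gm2: fixes c :: real shows "case_prod (\<lambda>(x::real) (y::real). (if x > c then 1 else (0::real)) * x) \<in> borel_measurable (borel \<Otimes>\<^sub>M borel)"
  by measurable
lemma Gm3: fixes c :: real shows "case_prod (\<lambda>(x::real) (y::real). (if x > c then 1 else (0::real)) * y) \<in> borel_measurable (borel \<Otimes>\<^sub>M borel)"
  by measurable
lemma Gm4: "case_prod (\<lambda>(x::real) (y::real). x) \<in> borel_measurable (borel \<Otimes>\<^sub>M borel)"
  by measurable

locale fir_setup = prob_space M for M :: "'a measure" +
  fixes u w :: "int \<Rightarrow> 'a \<Rightarrow> real" and c :: real
  assumes indep: "indep_vars (\<lambda>_. borel) (\<lambda>i. case i of Inl t \<Rightarrow> u t | Inr t \<Rightarrow> w t) (UNIV :: (int + int) set)"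
    and u_id: "\<And>t. distr M borel (u t) = distr M borel (u 0)"
    and w_id: "\<And>t. distr M borel (w t) = distr M borel (w 0)"
    and w_int: "integrable M (w 0)" and w_mean: "(LINT x|M. w 0 x) = 0"
    and u_int: "integrable M (u 0)"
begin

definition Z :: "int + int \<Rightarrow> 'a \<Rightarrow> real" where "Z = (\<lambda>i. case i of Inl t \<Rightarrow> u t | Inr t \<Rightarrow> w t)"

lemma Z_simps[simp]: "Z (Inl t) = u t" "Z (Inr t) = w t" unfolding Z_def by simp_all

lemma indepZ: "indep_vars (\<lambda>_. borel) Z UNIV" using indep unfolding Z_def .

lemma um[measurable]: "u t \<in> borel_measurable M"
proof -
  have "random_variable borel ((\<lambda>i. case i of Inl t \<Rightarrow> u t | Inr t \<Rightarrow> w t) (Inl t))"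
    using indep unfolding indep_vars_def by blast
  then show ?thesis by simp
qed
lemma wm[measurable]: "w t \<in> borel_measurable M"
proof -
  have "random_variable borel ((\<lambda>i. case i of Inl t \<Rightarrow> u t | Inr t \<Rightarrow> w t) (Inr t))"
    using indep unfolding indep_vars_def by blast
  then show ?thesis by simp
qed

lemma uint: "integrable M (u t)"
  using same_distr_integrable[OF u_id um um, of id] u_int by simp
lemma wint: "integrable M (w t)"
  using same_distr_integrable[OF w_id wm wm, of id] w_int by simp
lemma Eu: "expectation (u t) = expectation (u 0)"
  using same_distr_integral[OF u_id um um, of id] by simp
lemma Ew: "expectation (w t) = 0"
  using same_distr_integral[OF w_id wm wm, of id] w_mean by simp

lemma F_ind:
  assumes P: "P > 0"
  shows "AE \<omega> in M. (\<lambda>T. (\<Sum>t<T. \<phi> (t mod P) * (if u (int t) \<omega> > c then 1 else 0)) / real T)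
     \<longlonglongrightarrow> (\<Sum>r<P. \<phi> r) / real P * expectation (\<lambda>\<omega>. if u 0 \<omega> > c then 1 else 0)"
proof -
  have "AE \<omega> in M. (\<lambda>T. (\<Sum>t<T. \<phi> (t mod P) * (\<lambda>(x::real) (y::real). if x > c then 1 else (0::real)) (Z (Inl (int t)) \<omega>) (Z (Inr (int t)) \<omega>)) / real T)
     \<longlonglongrightarrow> (\<Sum>r<P. \<phi> r) / real P * expectation (\<lambda>\<omega>. (\<lambda>(x::real) (y::real). if x > c then 1 else (0::real)) (Z (Inl (int 0)) \<omega>) (Z (Inr (int 0)) \<omega>))"
  proof (rule per_slln[OF indepZ P, where a="\<lambda>t. Inl (int t)" and b="\<lambda>t. Inr (int t)", OF _ _ _ _ Gm1])
    show "integrable M (\<lambda>\<omega>. (\<lambda>(x::real) (y::real). if x > c then 1 else (0::real)) (Z (Inl (int 0)) \<omega>) (Z (Inr (int 0)) \<omega>))"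
      by (rule integrable_const_bound[where B=1]) auto
  qed (auto intro: u_id w_id)
  then show ?thesis by simp
qed

lemma u_same: "distr M borel (u s) = distr M borel (u s')" using u_id by metis
lemma w_same: "distr M borel (w s) = distr M borel (w s')" using w_id by metis

lemma mod_dist:
  fixes t t' P :: nat
  assumes "t \<noteq> t'" "t mod P = t' mod P" "P > 0"
  shows "int P \<le> \<bar>int t - int t'\<bar>"
proof -
  have key: "int P \<le> int b - int a" if "a < b" "a mod P = b mod P" for a b :: nat
  proof -
    have "P dvd b - a" using that mod_eq_dvd_iff_nat[of a b P] by simp
    moreover have "b - a > 0" using that by simp
    ultimately have "P \<le> b - a" by (rule dvd_imp_le)
    then show ?thesis using that by linarith
  qed
  show ?thesis
  proof (cases "t < t'")
    case True then show ?thesis using key[of t t'] assms by simp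
  next
    case False then have "t' < t" using assms by simp
    then show ?thesis using key[of t' t] assms by simp
  qed
qed

lemma F_indu:
  assumes P: "P > 0"
  shows "AE \<omega> in M. (\<lambda>T. (\<Sum>t<T. \<phi> (t mod P) * ((if u (int t) \<omega> > c then 1 else 0) * u (int t) \<omega>)) / real T)
     \<longlonglongrightarrow> (\<Sum>r<P. \<phi> r) / real P * expectation (\<lambda>\<omega>. (if u 0 \<omega> > c then 1 else 0) * u 0 \<omega>)"
proof -
  have "AE \<omega> in M. (\<lambda>T. (\<Sum>t<T. \<phi> (t mod P) * (\<lambda>(x::real) (y::real). (if x > c then 1 else (0::real)) * x) (Z (Inl (int t)) \<omega>) (Z (Inr (int t)) \<omega>)) / real T)
     \<longlonglongrightarrow> (\<Sum>r<P. \<phi> r) / real P * expectation (\<lambda>\<omega>. (\<lambda>(x::real) (y::real). (if x > c then 1 else (0::real)) * x) (Z (Inl (int 0)) \<omega>) (Z (Inr (int 0)) \<omega>))"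
  proof (rule per_slln[OF indepZ P, where a="\<lambda>t. Inl (int t)" and b="\<lambda>t. Inr (int t)", OF _ _ _ _ Gm2])
    show "integrable M (\<lambda>\<omega>. (\<lambda>(x::real) (y::real). (if x > c then 1 else (0::real)) * x) (Z (Inl (int 0)) \<omega>) (Z (Inr (int 0)) \<omega>))"
      by (rule Bochner_Integration.integrable_bound[OF u_int]) auto
  qed (auto intro: u_id w_id)
  then show ?thesis by simp
qed

lemma E_indu_shift:
  assumes k: "k \<noteq> 0"
  shows "expectation (\<lambda>\<omega>. (if u 0 \<omega> > c then 1 else 0) * u k \<omega>) = expectation (\<lambda>\<omega>. if u 0 \<omega> > c then 1 else 0) * expectation (u 0)"
proof -
  have "indep_var borel (\<lambda>\<omega>. (\<lambda>(x::real) (y::real). if x > c then 1 else (0::real)) (Z (Inl 0) \<omega>) (Z (Inl 0) \<omega>))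
                  borel (\<lambda>\<omega>. (\<lambda>(x::real) (y::real). x) (Z (Inl k) \<omega>) (Z (Inl k) \<omega>))"
    by (rule pair_indep[OF indepZ _ Gm1 Gm4]) (use k in auto)
  then have iv: "indep_var borel (\<lambda>\<omega>. if u 0 \<omega> > c then 1 else (0::real)) borel (u k)" by simp
  have "expectation (\<lambda>\<omega>. (if u 0 \<omega> > c then 1 else 0) * u k \<omega>) = expectation (\<lambda>\<omega>. if u 0 \<omega> > c then 1 else (0::real)) * expectation (u k)"
    by (rule indep_var_lebesgue_integral[OF iv]) (auto intro!: integrable_const_bound[where B=1] uint)
  then show ?thesis using Eu[of k] by simp
qed

lemma E_indw:
  shows "expectation (\<lambda>\<omega>. (if u 0 \<omega> > c then 1 else 0) * w k \<omega>) = 0"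
proof -
  have "indep_var borel (\<lambda>\<omega>. (\<lambda>(x::real) (y::real). if x > c then 1 else (0::real)) (Z (Inl 0) \<omega>) (Z (Inl 0) \<omega>))
                  borel (\<lambda>\<omega>. (\<lambda>(x::real) (y::real). x) (Z (Inr k) \<omega>) (Z (Inr k) \<omega>))"
    by (rule pair_indep[OF indepZ _ Gm1 Gm4]) auto
  then have iv: "indep_var borel (\<lambda>\<omega>. if u 0 \<omega> > c then 1 else (0::real)) borel (w k)" by simp
  have "expectation (\<lambda>\<omega>. (if u 0 \<omega> > c then 1 else 0) * w k \<omega>) = expectation (\<lambda>\<omega>. if u 0 \<omega> > c then 1 else (0::real)) * expectation (w k)"
    by (rule indep_var_lebesgue_integral[OF iv]) (auto intro!: integrable_const_bound[where B=1] wint)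
  then show ?thesis using Ew[of k] by simp
qed

lemma F_shift:
  assumes P: "P > 0" and k: "k \<noteq> 0" "\<bar>k\<bar> < int P"
  shows "AE \<omega> in M. (\<lambda>T. (\<Sum>t<T. \<phi> (t mod P) * ((if u (int t) \<omega> > c then 1 else 0) * u (int t + k) \<omega>)) / real T)
     \<longlonglongrightarrow> (\<Sum>r<P. \<phi> r) / real P * (expectation (\<lambda>\<omega>. if u 0 \<omega> > c then 1 else 0) * expectation (u 0))"
proof -
  have "AE \<omega> in M. (\<lambda>T. (\<Sum>t<T. \<phi> (t mod P) * (\<lambda>(x::real) (y::real). (if x > c then 1 else (0::real)) * y) (Z (Inl (int t)) \<omega>) (Z (Inl (int t + k)) \<omega>)) / real T)
     \<longlonglongrightarrow> (\<Sum>r<P. \<phi> r) / real P * expectation (\<lambda>\<omega>. (\<lambda>(x::real) (y::real). (if x > c then 1 else (0::real)) * y) (Z (Inl (int 0)) \<omega>) (Z (Inl (int 0 + k)) \<omega>))"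
  proof (rule per_slln[OF indepZ P, where a="\<lambda>t. Inl (int t)" and b="\<lambda>t. Inl (int t + k)", OF _ _ _ _ Gm3])
    show "integrable M (\<lambda>\<omega>. (\<lambda>(x::real) (y::real). (if x > c then 1 else (0::real)) * y) (Z (Inl (int 0)) \<omega>) (Z (Inl (int 0 + k)) \<omega>))"
      by (rule Bochner_Integration.integrable_bound[OF uint[of k]]) auto
    fix t t' :: nat assume tt: "t \<noteq> t'" "t mod P = t' mod P"
    have "int P \<le> \<bar>int t - int t'\<bar>" by (rule mod_dist[OF tt P])
    then show "{Inl (int t), Inl (int t + k)} \<inter> {Inl (int t'), Inl (int t' + k)} = ({} :: (int + int) set)"
      using k tt by auto
  qed (use k in \<open>auto intro: u_same\<close>)
  then show ?thesis using E_indu_shift[OF k(1)] by simp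
qed

lemma F_w:
  assumes P: "P > 0"
  shows "AE \<omega> in M. (\<lambda>T. (\<Sum>t<T. \<phi> (t mod P) * ((if u (int t) \<omega> > c then 1 else 0) * w (int t + k) \<omega>)) / real T)
     \<longlonglongrightarrow> 0"
proof -
  have "AE \<omega> in M. (\<lambda>T. (\<Sum>t<T. \<phi> (t mod P) * (\<lambda>(x::real) (y::real). (if x > c then 1 else (0::real)) * y) (Z (Inl (int t)) \<omega>) (Z (Inr (int t + k)) \<omega>)) / real T)
     \<longlonglongrightarrow> (\<Sum>r<P. \<phi> r) / real P * expectation (\<lambda>\<omega>. (\<lambda>(x::real) (y::real). (if x > c then 1 else (0::real)) * y) (Z (Inl (int 0)) \<omega>) (Z (Inr (int 0 + k)) \<omega>))"
  proof (rule per_slln[OF indepZ P, where a="\<lambda>t. Inl (int t)" and b="\<lambda>t. Inr (int t + k)", OF _ _ _ _ Gm3])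
    show "integrable M (\<lambda>\<omega>. (\<lambda>(x::real) (y::real). (if x > c then 1 else (0::real)) * y) (Z (Inl (int 0)) \<omega>) (Z (Inr (int 0 + k)) \<omega>))"
      by (rule Bochner_Integration.integrable_bound[OF wint[of k]]) auto
  qed (auto intro: u_same w_same)
  then show ?thesis using E_indw[of k] by simp
qed

lemma F_u1_gen:
  assumes P: "P > 0"
  shows "AE \<omega> in M. (\<lambda>T. (\<Sum>t<T. \<phi> (t mod P) * (\<lambda>(x::real) (y::real). x) (Z (Inl (int t + 1)) \<omega>) (Z (Inr (int t)) \<omega>)) / real T)
     \<longlonglongrightarrow> (\<Sum>r<P. \<phi> r) / real P * expectation (\<lambda>\<omega>. (\<lambda>(x::real) (y::real). x) (Z (Inl (int 0 + 1)) \<omega>) (Z (Inr (int 0)) \<omega>))"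
proof (rule per_slln[OF indepZ P, where a="\<lambda>t. Inl (int t + 1)" and b="\<lambda>t. Inr (int t)", OF _ _ _ _ Gm4])
  show "integrable M (\<lambda>\<omega>. (\<lambda>(x::real) (y::real). x) (Z (Inl (int 0 + 1)) \<omega>) (Z (Inr (int 0)) \<omega>))"
    using uint[of 1] by simp
qed (auto intro: u_same w_same)

lemma F_u1:
  shows "AE \<omega> in M. (\<lambda>T. (\<Sum>t<T. u (int t + 1) \<omega>) / real T) \<longlonglongrightarrow> expectation (u 0)"
  using F_u1_gen[of 1 "\<lambda>_. 1"] Eu[of 1] by simp

end


lemma sum_from1: "(\<Sum>i'=1..i. f (i' - 1)) = (\<Sum>k<i. f k)" for f :: "nat \<Rightarrow> real"
proof -
  have "(\<Sum>i'=1..i. f (i' - 1)) = (\<Sum>i'=Suc 0..i. f (i' - 1))" by simp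
  also have "\<dots> = (\<Sum>k<i. f (Suc k - 1))" by (rule sum.atLeast1_atMost_eq)
  finally show ?thesis by simp
qed

lemma ratio_lim:
  fixes f g :: "nat \<Rightarrow> real"
  assumes "(\<lambda>T. f T / real T) \<longlonglongrightarrow> A" "(\<lambda>T. g T / real T) \<longlonglongrightarrow> B" "B \<noteq> 0"
  shows "(\<lambda>T. f T / g T) \<longlonglongrightarrow> A / B"
proof (rule Lim_transform_eventually)
  show "(\<lambda>T. (f T / real T) / (g T / real T)) \<longlonglongrightarrow> A / B" by (rule tendsto_divide[OF assms])
  show "\<forall>\<^sub>F T in sequentially. f T / real T / (g T / real T) = f T / g T"
    unfolding eventually_sequentially by (intro exI[of _ 1]) auto
qed

lemma infinite_from_lim:
  fixes S :: "nat set"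
  assumes lim: "(\<lambda>T. (\<Sum>t<T. if t \<in> S then 1 else 0) / real T) \<longlonglongrightarrow> B" and B: "B > 0"
  shows "infinite S"
proof
  assume fin: "finite S"
  have "(\<lambda>T. real (card S) * (1 / real T)) \<longlonglongrightarrow> real (card S) * 0"
    by (intro tendsto_mult tendsto_const lim_1_over_n)
  then have z: "(\<lambda>T. real (card S) * (1 / real T)) \<longlonglongrightarrow> 0" by simp
  have "B \<le> 0"
  proof (rule LIMSEQ_le[OF lim z])
    show "\<exists>N. \<forall>n\<ge>N. (\<Sum>t<n. if t \<in> S then 1 else 0) / real n \<le> real (card S) * (1 / real n)"
    proof (intro exI allI impI)
      fix n :: nat
      have "(\<Sum>t<n. if t \<in> S then 1 else 0) = real (card (S \<inter> {..<n}))" by (rule card_as_sum[symmetric])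
      also have "\<dots> \<le> real (card S)" using fin by (simp add: card_mono)
      finally show "(\<Sum>t<n. if t \<in> S then 1 else 0) / real n \<le> real (card S) * (1 / real n)"
        by (simp add: divide_right_mono)
    qed
  qed
  then show False using B by simp
qed

lemma filterlim_enum:
  fixes S :: "nat set" assumes "infinite S"
  shows "filterlim (enumerate S) at_top sequentially"
  unfolding filterlim_at_top eventually_sequentially
  using le_enumerate[OF assms] order_trans by blast

lemma filterlim_mult_const:
  fixes N :: nat assumes "N \<ge> 1"
  shows "filterlim (\<lambda>j. N * j) at_top sequentially"
  unfolding filterlim_at_top eventually_sequentially
proof (intro allI exI impI)
  fix Z j :: nat assume "Z \<le> j" then show "Z \<le> N * j" using assms by (metis le_trans mult_le_mono1 mult_1)
qed

definition phiN :: "nat \<Rightarrow> nat \<Rightarrow> real" where "phiN N r = (if r \<in> {1..N} then 1 else 0)"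

lemma sum_phiN: "(\<Sum>r<N+2. phiN N r) = real N"
proof -
  have "(\<Sum>r<N+2. phiN N r) = (\<Sum>r\<in>{..<N+2} \<inter> {1..N}. 1)"
    unfolding phiN_def by (rule sum.inter_restrict[symmetric]) simp
  also have "{..<N+2} \<inter> {1..N} = {1..N}" by auto
  finally show ?thesis by simp
qed

definition Sset :: "nat \<Rightarrow> real \<Rightarrow> (int \<Rightarrow> 'a \<Rightarrow> real) \<Rightarrow> 'a \<Rightarrow> nat set" where
  "Sset N c u \<omega> = {t::nat. 1 \<le> t \<and> t mod (N+2) \<in> {1..N} \<and> c < u (int t) \<omega>}"

lemma Sset_ind: "(if t \<in> Sset N c u \<omega> then 1 else 0) = phiN N (t mod (N+2)) * (if u (int t) \<omega> > c then 1 else 0)"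
  unfolding Sset_def phiN_def by (cases t) auto

lemma tau_Sset: "tau N c u \<omega> i = enumerate (Sset N c u \<omega>) (i - 1)"
  unfolding tau_def Sset_def ..

lemma fir_split:
  "(if t \<in> Sset N c u \<omega> then fir_out b N u w (int (t + n)) \<omega> else 0)
   = (\<Sum>m=1..N. b m * (phiN N (t mod (N+2)) * ((if u (int t) \<omega> > c then 1 else 0) * u (int t + (int n - int m)) \<omega>)))
     + phiN N (t mod (N+2)) * ((if u (int t) \<omega> > c then 1 else 0) * w (int t + int n) \<omega>)"
proof (cases "t \<in> Sset N c u \<omega>")
  case True
  then have "phiN N (t mod (N+2)) * (if u (int t) \<omega> > c then 1 else 0) = 1"
    using Sset_ind[of t N c u \<omega>] by simp
  then have h: "phiN N (t mod (N+2)) = 1" "(if u (int t) \<omega> > c then 1 else 0) = (1::real)"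
    using True unfolding Sset_def phiN_def by auto
  show ?thesis using True unfolding fir_out_def h by (simp add: algebra_simps)
next
  case False
  then have "phiN N (t mod (N+2)) * (if u (int t) \<omega> > c then 1 else 0) = 0"
    using Sset_ind[of t N c u \<omega>] by simp
  then have "phiN N (t mod (N+2)) = 0 \<or> (if u (int t) \<omega> > c then 1 else 0) = (0::real)" by simp
  then show ?thesis using False by auto
qed

lemma d_avg_eq:
  assumes inf: "infinite (Sset N c u \<omega>)"
  defines "S \<equiv> Sset N c u \<omega>"
  shows "d_avg b N c u w n i \<omega> = (\<Sum>t<enumerate S i. if t \<in> S then fir_out b N u w (int (t + n)) \<omega> else 0)
            / (\<Sum>t<enumerate S i. if t \<in> S then 1 else 0)"
proof -
  have "(\<Sum>i'=1..i. fir_out b N u w (int (tau N c u \<omega> i' + n)) \<omega>) = (\<Sum>k<i. fir_out b N u w (int (enumerate S k + n)) \<omega>)"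
    unfolding tau_Sset S_def by (rule sum_from1[where f="\<lambda>k. fir_out b N u w (int (enumerate (Sset N c u \<omega>) k + n)) \<omega>"])
  also have "\<dots> = (\<Sum>t<enumerate S i. if t \<in> S then fir_out b N u w (int (t + n)) \<omega> else 0)"
    by (rule enum_sum[OF inf[folded S_def]])
  finally show ?thesis unfolding d_avg_def enum_card[OF inf[folded S_def]] by simp
qed

lemma d_lim:
  fixes u w :: "int \<Rightarrow> 'a \<Rightarrow> real"
  assumes N1: "N \<ge> 1" and p: "p > 0"
  and L1: "(\<lambda>T. (\<Sum>t<T. phiN N (t mod (N+2)) * (if u (int t) \<omega> > c then 1 else 0)) / real T) \<longlonglongrightarrow> real N / real (N+2) * p"
  and LA: "\<And>k. \<bar>k\<bar> < int (N+2) \<Longrightarrow> (\<lambda>T. (\<Sum>t<T. phiN N (t mod (N+2)) * ((if u (int t) \<omega> > c then 1 else 0) * u (int t + k) \<omega>)) / real T)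
               \<longlonglongrightarrow> real N / real (N+2) * (if k = 0 then p * \<mu>c else p * \<mu>)"
  and LW: "\<And>k. (\<lambda>T. (\<Sum>t<T. phiN N (t mod (N+2)) * ((if u (int t) \<omega> > c then 1 else 0) * w (int t + k) \<omega>)) / real T) \<longlonglongrightarrow> 0"
  and n: "n \<in> {1..N}"
  shows "infinite (Sset N c u \<omega>)"
    and "(\<lambda>j. d_avg b N c u w n (N*j) \<omega>) \<longlonglongrightarrow> (\<Sum>m=1..N. b m * (if m = n then \<mu>c else \<mu>))"
proof -
  define S where "S = Sset N c u \<omega>"
  define \<gamma> where "\<gamma> = real N / real (N+2) * p"
  have \<gamma>: "\<gamma> > 0" unfolding \<gamma>_def using N1 p by simp
  have CS: "(\<lambda>T. (\<Sum>t<T. if t \<in> S then 1 else 0) / real T) \<longlonglongrightarrow> \<gamma>"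
    unfolding S_def Sset_ind \<gamma>_def by (rule L1)
  show inf: "infinite (Sset N c u \<omega>)" using infinite_from_lim[OF CS \<gamma>] unfolding S_def .
  define A where "A k T = (\<Sum>t<T. phiN N (t mod (N+2)) * ((if u (int t) \<omega> > c then 1 else 0) * u (int t + k) \<omega>))" for k T
  define W where "W T = (\<Sum>t<T. phiN N (t mod (N+2)) * ((if u (int t) \<omega> > c then 1 else 0) * w (int t + int n) \<omega>))" for T
  have NS: "(\<Sum>t<T. if t \<in> S then fir_out b N u w (int (t + n)) \<omega> else 0) = (\<Sum>m=1..N. b m * A (int n - int m) T) + W T" for T
  proof -
    have "(\<Sum>t<T. if t \<in> S then fir_out b N u w (int (t + n)) \<omega> else 0)
        = (\<Sum>t<T. (\<Sum>m=1..N. b m * (phiN N (t mod (N+2)) * ((if u (int t) \<omega> > c then 1 else 0) * u (int t + (int n - int m)) \<omega>)))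
             + phiN N (t mod (N+2)) * ((if u (int t) \<omega> > c then 1 else 0) * w (int t + int n) \<omega>))"
      unfolding S_def by (intro sum.cong refl fir_split)
    also have "\<dots> = (\<Sum>m=1..N. b m * A (int n - int m) T) + W T"
      unfolding sum.distrib A_def W_def by (subst sum.swap) (simp add: sum_distrib_left)
    finally show ?thesis .
  qed
  define D where "D = (\<Sum>m=1..N. b m * (if m = n then \<mu>c else \<mu>))"
  have NSlim: "(\<lambda>T. (\<Sum>t<T. if t \<in> S then fir_out b N u w (int (t + n)) \<omega> else 0) / real T) \<longlonglongrightarrow> \<gamma> * D"
  proof -
    have "(\<lambda>T. (\<Sum>m=1..N. b m * (A (int n - int m) T / real T)) + W T / real T)
        \<longlonglongrightarrow> (\<Sum>m=1..N. b m * (real N / real (N+2) * (if int n - int m = 0 then p * \<mu>c else p * \<mu>))) + 0"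
    proof (intro tendsto_add tendsto_sum tendsto_mult tendsto_const)
      fix m assume m: "m \<in> {1..N}"
      have "\<bar>int n - int m\<bar> < int (N+2)" using m n by auto
      then show "(\<lambda>T. A (int n - int m) T / real T) \<longlonglongrightarrow> real N / real (N+2) * (if int n - int m = 0 then p * \<mu>c else p * \<mu>)"
        unfolding A_def by (rule LA)
    next
      show "(\<lambda>T. W T / real T) \<longlonglongrightarrow> 0" unfolding W_def by (rule LW)
    qed
    moreover have "(\<Sum>m=1..N. b m * (real N / real (N+2) * (if int n - int m = 0 then p * \<mu>c else p * \<mu>))) = \<gamma> * D"
      unfolding \<gamma>_def D_def sum_distrib_left by (intro sum.cong refl) auto
    moreover have "(\<Sum>t<T. if t \<in> S then fir_out b N u w (int (t + n)) \<omega> else 0) / real T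
        = (\<Sum>m=1..N. b m * (A (int n - int m) T / real T)) + W T / real T" for T
      unfolding NS by (simp add: add_divide_distrib sum_divide_distrib)
    ultimately show ?thesis by simp
  qed
  have F: "(\<lambda>T. (\<Sum>t<T. if t \<in> S then fir_out b N u w (int (t + n)) \<omega> else 0) / (\<Sum>t<T. if t \<in> S then 1 else 0)) \<longlonglongrightarrow> \<gamma> * D / \<gamma>"
    by (rule ratio_lim[OF NSlim CS]) (use \<gamma> in simp)
  have F': "(\<lambda>T. (\<Sum>t<T. if t \<in> S then fir_out b N u w (int (t + n)) \<omega> else 0) / (\<Sum>t<T. if t \<in> S then 1 else 0)) \<longlonglongrightarrow> D"
    using F \<gamma> by simp
  have lim_idx: "filterlim (\<lambda>j. enumerate S (N*j)) at_top sequentially"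
    by (rule filterlim_compose[OF filterlim_enum filterlim_mult_const[OF N1]]) (use inf in \<open>simp add: S_def\<close>)
  have "(\<lambda>j. (\<Sum>t<enumerate S (N*j). if t \<in> S then fir_out b N u w (int (t + n)) \<omega> else 0) / (\<Sum>t<enumerate S (N*j). if t \<in> S then 1 else 0)) \<longlonglongrightarrow> D"
    by (rule filterlim_compose[OF F' lim_idx])
  then show "(\<lambda>j. d_avg b N c u w n (N*j) \<omega>) \<longlonglongrightarrow> (\<Sum>m=1..N. b m * (if m = n then \<mu>c else \<mu>))"
    unfolding d_avg_eq[OF inf] S_def[symmetric] D_def .
qed

lemma drop0:
  fixes f :: "nat \<Rightarrow> real"
  assumes "(\<lambda>T. (\<Sum>t<T. f t) / real T) \<longlonglongrightarrow> L"
  shows "(\<lambda>T. (\<Sum>t<T. if t = 0 then 0 else f t) / real T) \<longlonglongrightarrow> L"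
proof -
  have "(\<lambda>T. (\<Sum>t<T. f t) / real T - f 0 * (1 / real T)) \<longlonglongrightarrow> L - f 0 * 0"
    by (intro tendsto_diff tendsto_mult assms tendsto_const lim_1_over_n)
  then have l: "(\<lambda>T. (\<Sum>t<T. f t) / real T - f 0 * (1 / real T)) \<longlonglongrightarrow> L" by simp
  show ?thesis
  proof (rule Lim_transform_eventually[OF l])
    show "\<forall>\<^sub>F T in sequentially. (\<Sum>t<T. f t) / real T - f 0 * (1 / real T) = (\<Sum>t<T. if t = 0 then 0 else f t) / real T"
      unfolding eventually_sequentially
    proof (intro exI[of _ 1] allI impI)
      fix T :: nat assume T: "1 \<le> T"
      have "(\<Sum>t<T. f t) = f 0 + (\<Sum>t<T. if t = 0 then 0 else f t)"
      proof -
        have "(\<Sum>t<T. f t) = (\<Sum>t<T. (if t = 0 then f t else 0) + (if t = 0 then 0 else f t))"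
          by (intro sum.cong) auto
        also have "\<dots> = (\<Sum>t<T. if t = 0 then f t else 0) + (\<Sum>t<T. if t = 0 then 0 else f t)" by (rule sum.distrib)
        also have "(\<Sum>t<T. if t = 0 then f t else 0) = f 0" using T by (simp add: sum.delta)
        finally show ?thesis .
      qed
      then show "(\<Sum>t<T. f t) / real T - f 0 * (1 / real T) = (\<Sum>t<T. if t = 0 then 0 else f t) / real T"
        by (simp add: add_divide_distrib)
    qed
  qed
qed

lemma s_time_lim:
  assumes inf: "infinite (Sset N c u \<omega>)" and N1: "N \<ge> 1"
  shows "filterlim (\<lambda>j. s_time N c u \<omega> j) at_top sequentially"
proof -
  have f1: "filterlim (\<lambda>j. N * j - 1) at_top sequentially"
    unfolding filterlim_at_top eventually_sequentially
  proof (intro allI exI impI)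
    fix Z j :: nat assume "Suc Z \<le> j" then show "Z \<le> N * j - 1" using N1 by (metis diff_Suc_1 le_diff_conv2 le_trans mult_le_mono1 mult_1 Suc_leD le_add1 Suc_le_eq diff_le_mono)
  qed
  have "filterlim (\<lambda>j. enumerate (Sset N c u \<omega>) (N * j - 1)) at_top sequentially"
    by (rule filterlim_compose[OF filterlim_enum[OF inf] f1])
  then show ?thesis unfolding s_time_def tau_Sset .
qed

lemma e1_lim:
  assumes inf: "infinite (Sset N c u \<omega>)" and N1: "N \<ge> 1"
    and L5: "(\<lambda>T. (\<Sum>t<T. u (int t + 1) \<omega>) / real T) \<longlonglongrightarrow> \<mu>"
  shows "(\<lambda>j. e1_avg u (s_time N c u \<omega> j) \<omega>) \<longlonglongrightarrow> \<mu>"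
proof -
  have eq: "e1_avg u T \<omega> = (\<Sum>t<T. u (int t + 1) \<omega>) / real T" for T
  proof -
    have "(\<Sum>t'=1..T. u (int t') \<omega>) = (\<Sum>t'=Suc 0..T. u (int t') \<omega>)" by simp
    also have "\<dots> = (\<Sum>k<T. u (int (Suc k)) \<omega>)" by (rule sum.atLeast1_atMost_eq)
    finally show ?thesis unfolding e1_avg_def by (simp add: add.commute)
  qed
  show ?thesis unfolding eq by (rule filterlim_compose[OF L5 s_time_lim[OF inf N1]])
qed

lemma e2_lim:
  assumes inf: "infinite (Sset N c u \<omega>)" and N1: "N \<ge> 1" and p: "p > 0"
    and L6: "(\<lambda>T. (\<Sum>t<T. (if u (int t) \<omega> > c then 1 else 0) * u (int t) \<omega>) / real T) \<longlonglongrightarrow> p * \<mu>c"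
    and L7: "(\<lambda>T. (\<Sum>t<T. (if u (int t) \<omega> > c then 1 else 0)) / real T) \<longlonglongrightarrow> p"
  shows "(\<lambda>j. e2_avg c u (k_count N c u \<omega> j) \<omega>) \<longlonglongrightarrow> \<mu>c"
proof -
  define E where "E = {t::nat. 1 \<le> t \<and> c < u (int t) \<omega>}"
  have Eind: "(if t \<in> E then x else 0) = (if t = 0 then 0 else (if u (int t) \<omega> > c then 1 else 0) * x)" for t and x :: real
    unfolding E_def by auto
  have l6: "(\<lambda>T. (\<Sum>t<T. if t \<in> E then u (int t) \<omega> else 0) / real T) \<longlonglongrightarrow> p * \<mu>c"
    unfolding Eind by (rule drop0[OF L6])
  have l7: "(\<lambda>T. (\<Sum>t<T. if t \<in> E then 1 else 0) / real T) \<longlonglongrightarrow> p"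
    using drop0[OF L7] unfolding Eind by (simp only: mult_1_right)
  have infE: "infinite E" by (rule infinite_from_lim[OF l7 p])
  have G: "(\<lambda>T. (\<Sum>t<T. if t \<in> E then u (int t) \<omega> else 0) / (\<Sum>t<T. if t \<in> E then 1 else 0)) \<longlonglongrightarrow> p * \<mu>c / p"
    by (rule ratio_lim[OF l6 l7]) (use p in simp)
  have eq: "e2_avg c u (k_count N c u \<omega> j) \<omega> = (\<lambda>T. (\<Sum>t<T. if t \<in> E then u (int t) \<omega> else 0) / (\<Sum>t<T. if t \<in> E then 1 else 0)) (s_time N c u \<omega> j + 1)" for j
  proof -
    define T where "T = s_time N c u \<omega> j + 1"
    have kc: "k_count N c u \<omega> j = card (E \<inter> {..<T})"
      unfolding k_count_def T_def E_def by (rule arg_cong[where f=card]) auto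
    have "(\<Sum>k'=1..card (E \<inter> {..<T}). u (int (exc_time c u \<omega> k')) \<omega>) = (\<Sum>k<card (E \<inter> {..<T}). u (int (enumerate E k)) \<omega>)"
      unfolding exc_time_def E_def by (rule sum_from1[where f="\<lambda>k. u (int (enumerate {t. 1 \<le> t \<and> c < u (int t) \<omega>} k)) \<omega>"])
    also have "\<dots> = (\<Sum>t<T. if t \<in> E then u (int t) \<omega> else 0)"
      by (rule enum_card_sum[OF infE])
    finally have num: "(\<Sum>k'=1..card (E \<inter> {..<T}). u (int (exc_time c u \<omega> k')) \<omega>) = (\<Sum>t<T. if t \<in> E then u (int t) \<omega> else 0)" .
    show ?thesis unfolding e2_avg_def kc num card_as_sum T_def[symmetric] by simp
  qed
  have ft: "filterlim (\<lambda>j. s_time N c u \<omega> j + 1) at_top sequentially"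
    by (rule filterlim_compose[OF filterlim_Suc s_time_lim[OF inf N1], unfolded Suc_eq_plus1])
  have "(\<lambda>j. (\<lambda>T. (\<Sum>t<T. if t \<in> E then u (int t) \<omega> else 0) / (\<Sum>t<T. if t \<in> E then 1 else 0)) (s_time N c u \<omega> j + 1)) \<longlonglongrightarrow> p * \<mu>c / p"
    by (rule filterlim_compose[OF G ft])
  then show ?thesis unfolding eq using p by simp
qed

lemma D_algebra:
  fixes b :: "nat \<Rightarrow> real"
  assumes N1: "N \<ge> 1" and n: "n \<in> {1..N}" and c1: "\<mu>c \<noteq> \<mu>" and c2: "\<mu>c + (real N - 1) * \<mu> \<noteq> 0"
  defines "D \<equiv> \<lambda>n. (\<Sum>m=1..N. b m * (if m = n then \<mu>c else \<mu>))"
  shows "(D n - \<mu> * (\<Sum>q<N. D (q+1)) / (\<mu>c + (real N - 1) * \<mu>)) / (\<mu>c - \<mu>) = b n"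
proof -
  define B where "B = (\<Sum>m=1..N. b m)"
  define s where "s = \<mu>c + (real N - 1) * \<mu>"
  have inner: "(\<Sum>n'=1..N. (if m = n' then \<mu>c else \<mu>)) = s" if m: "m \<in> {1..N}" for m
  proof -
    have "(\<Sum>n'=1..N. (if m = n' then \<mu>c else \<mu>)) = (\<Sum>n'=1..N. \<mu> + (if m = n' then \<mu>c - \<mu> else 0))"
      by (intro sum.cong) auto
    also have "\<dots> = real N * \<mu> + (\<mu>c - \<mu>)" using m by (simp add: sum.distrib)
    finally show ?thesis unfolding s_def by (simp add: algebra_simps)
  qed
  have sumD: "(\<Sum>q<N. D (q+1)) = B * s"
  proof -
    have "(\<Sum>n'=Suc 0..N. D n') = (\<Sum>q<N. D (Suc q))" by (rule sum.atLeast1_atMost_eq)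
    then have "(\<Sum>q<N. D (q+1)) = (\<Sum>n'=Suc 0..N. D n')" by simp
    also have "\<dots> = (\<Sum>n'=1..N. \<Sum>m=1..N. b m * (if m = n' then \<mu>c else \<mu>))" unfolding D_def by simp
    also have "\<dots> = (\<Sum>m=1..N. b m * (\<Sum>n'=1..N. (if m = n' then \<mu>c else \<mu>)))"
      by (subst sum.swap) (simp add: sum_distrib_left)
    also have "\<dots> = (\<Sum>m=1..N. b m * s)" using inner by (intro sum.cong) auto
    finally show ?thesis unfolding B_def by (simp add: sum_distrib_right)
  qed
  have Dn: "D n - \<mu> * B = b n * (\<mu>c - \<mu>)"
  proof -
    have "D n - \<mu> * B = (\<Sum>m=1..N. b m * ((if m = n then \<mu>c else \<mu>) - \<mu>))"
      unfolding D_def B_def by (simp add: sum_distrib_left sum_subtractf algebra_simps)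
    also have "\<dots> = (\<Sum>m=1..N. if m = n then b m * (\<mu>c - \<mu>) else 0)" by (intro sum.cong) auto
    also have "\<dots> = b n * (\<mu>c - \<mu>)" using n by simp
    finally show ?thesis .
  qed
  have s0: "s \<noteq> 0" using c2 unfolding s_def .
  have "D n - \<mu> * (\<Sum>q<N. D (q+1)) / s = D n - \<mu> * B" unfolding sumD using s0 by simp
  then show ?thesis using Dn c1 unfolding s_def[symmetric] by simp
qed

lemma bhat_lim:
  fixes b :: "nat \<Rightarrow> real" and u w :: "int \<Rightarrow> 'a \<Rightarrow> real"
  assumes N1: "N \<ge> 1"
  and dl: "\<And>n. n \<in> {1..N} \<Longrightarrow> (\<lambda>j. dhat sg \<alpha> b N c u w n j \<omega>) \<longlonglongrightarrow> (\<Sum>m=1..N. b m * (if m = n then \<mu>c else \<mu>))"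
  and e1l: "(\<lambda>j. e1hat sg \<alpha> N c u j \<omega>) \<longlonglongrightarrow> \<mu>"
  and e2l: "(\<lambda>j. e2hat sg \<alpha> N c u j \<omega>) \<longlonglongrightarrow> \<mu>c"
  and c1: "\<mu>c \<noteq> \<mu>" and c2: "\<mu>c \<noteq> (1 - real N) * \<mu>"
  and n: "n \<in> {1..N}"
  shows "(\<lambda>j. bhat sg \<alpha> b N c u w n j \<omega>) \<longlonglongrightarrow> b n"
proof -
  define D where "D = (\<lambda>n. (\<Sum>m=1..N. b m * (if m = n then \<mu>c else \<mu>)))"
  define a where "a j = e2hat sg \<alpha> N c u j \<omega>" for j
  define e where "e j = e1hat sg \<alpha> N c u j \<omega>" for j
  define dd where "dd p j = dhat sg \<alpha> b N c u w (p + 1) j \<omega>" for p j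
  have c2': "\<mu>c + (real N - 1) * \<mu> \<noteq> 0" using c2 by (simp add: algebra_simps)
  have la: "a \<longlonglongrightarrow> \<mu>c" unfolding a_def by (rule e2l)
  have le: "e \<longlonglongrightarrow> \<mu>" unfolding e_def by (rule e1l)
  have ldd: "(\<lambda>j. dd p j) \<longlonglongrightarrow> D (p + 1)" if "p < N" for p
    unfolding dd_def D_def by (rule dl) (use that in auto)
  have ev1: "eventually (\<lambda>j. a j - e j \<noteq> 0) sequentially"
    by (rule tendsto_imp_eventually_ne[OF tendsto_diff[OF la le]]) (use c1 in simp)
  have ev2: "eventually (\<lambda>j. a j + (real N - 1) * e j \<noteq> 0) sequentially"
    by (rule tendsto_imp_eventually_ne[OF tendsto_add[OF la tendsto_mult[OF tendsto_const le]] c2'])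
  define F where "F j = (dd (n - 1) j - e j * (\<Sum>q<N. dd q j) / (a j + (real N - 1) * e j)) / (a j - e j)" for j
  have eqF: "eventually (\<lambda>j. F j = bhat sg \<alpha> b N c u w n j \<omega>) sequentially"
    using ev1 ev2
  proof eventually_elim
    fix j assume h1: "a j - e j \<noteq> 0" and h2: "a j + (real N - 1) * e j \<noteq> 0"
    obtain B where B: "mat_inverse (mat N N (\<lambda>(p, q). if p = q then a j else e j)) = Some B"
      and Bv: "B *\<^sub>v vec N (\<lambda>p. dd p j) = vec N (\<lambda>p. (dd p j - e j * (\<Sum>q<N. dd q j) / (a j + (real N - 1) * e j)) / (a j - e j))"
      using Umat_solve[OF h1 h2, of "\<lambda>p. dd p j"] by blast
    have nN: "n - 1 < N" using n by auto
    have "bhat sg \<alpha> b N c u w n j \<omega> = (B *\<^sub>v vec N (\<lambda>p. dd p j)) $ (n - 1)"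
      unfolding bhat_def Let_def U_mat_def a_def[symmetric] e_def[symmetric] dd_def[symmetric] B by simp
    also have "\<dots> = F j" unfolding Bv F_def using nN by simp
    finally show "F j = bhat sg \<alpha> b N c u w n j \<omega>" by simp
  qed
  have "F \<longlonglongrightarrow> (D (n - 1 + 1) - \<mu> * (\<Sum>q<N. D (q + 1)) / (\<mu>c + (real N - 1) * \<mu>)) / (\<mu>c - \<mu>)"
    unfolding F_def
    by (intro tendsto_intros ldd la le tendsto_sum) (use n c1 c2' in auto)
  moreover have "n - 1 + 1 = n" using n by auto
  ultimately have "F \<longlonglongrightarrow> b n" using D_algebra[OF N1 n c1 c2', of b] unfolding D_def by simp
  then show ?thesis by (rule Lim_transform_eventually[OF _ eqF])
qed


lemma sa_hat_conv:
  fixes x \<alpha> :: "nat \<Rightarrow> real" and sg :: "real \<Rightarrow> real"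
  assumes x: "x \<longlonglongrightarrow> L" and \<alpha>pos: "\<And>j. j \<ge> 1 \<Longrightarrow> \<alpha> j > 0" and \<alpha>0: "\<alpha> \<longlonglongrightarrow> 0"
    and \<alpha>div: "\<not> summable \<alpha>"
    and sg_neg: "\<forall>z<0. sg z = -1" and sg_pos: "\<forall>z>0. sg z = 1"
    and sg_0: "sg 0 \<in> {-1, 0, 1}"
  shows "(\<lambda>j. sa_hat sg \<alpha> x j) \<longlonglongrightarrow> L"
proof -
  have r: "(\<lambda>k. sa_rec sg \<alpha> x k) \<longlonglongrightarrow> L"
    by (rule sa_rec_conv[where x=x and L=L and \<alpha>=\<alpha> and sg=sg]) (use assms in auto)
  have f: "filterlim (\<lambda>j::nat. j - 1) at_top sequentially"
    unfolding filterlim_at_top eventually_sequentially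
  proof (intro allI)
    fix Z :: nat show "\<exists>N. \<forall>n\<ge>N. Z \<le> n - 1" by (intro exI[of _ "Suc Z"]) auto
  qed
  show ?thesis unfolding sa_hat_def by (rule filterlim_compose[OF r f])
qed

theorem theorem4:
  fixes M :: "'a measure" and u w :: "int \<Rightarrow> 'a \<Rightarrow> real"
    and b :: "nat \<Rightarrow> real" and N :: nat and c :: real
    and \<alpha> :: "nat \<Rightarrow> real" and sg :: "real \<Rightarrow> real"
  assumes "prob_space M"
    and indep: "prob_space.indep_vars M (\<lambda>_. borel)
                 (\<lambda>i. case i of Inl t \<Rightarrow> u t | Inr t \<Rightarrow> w t) (UNIV :: (int + int) set)"
    and u_id: "\<And>t. distr M borel (u t) = distr M borel (u 0)"
    and w_id: "\<And>t. distr M borel (w t) = distr M borel (w 0)"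
    and w_int: "integrable M (w 0)" and w_mean: "(LINT x|M. w 0 x) = 0"
    and u_int: "integrable M (u 0)"
    and c_pos: "measure M {\<omega> \<in> space M. u 0 \<omega> > c} > 0"
    and c1: "cond_exp_gt M (u 0) c \<noteq> (LINT x|M. u 0 x)"
    and c2: "cond_exp_gt M (u 0) c \<noteq> (1 - real N) * (LINT x|M. u 0 x)"
    and \<alpha>_pos: "\<And>j. j \<ge> 1 \<Longrightarrow> \<alpha> j > 0"
    and \<alpha>_div: "\<not> summable \<alpha>"
    and \<alpha>_sq: "summable (\<lambda>j. (\<alpha> j)\<^sup>2)"
    and sg_neg: "\<And>x. x < 0 \<Longrightarrow> sg x = -1"
    and sg_pos: "\<And>x. x > 0 \<Longrightarrow> sg x = 1"
    and sg_0: "sg 0 \<in> {-1, 0, 1}"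
  shows "AE \<omega> in M. \<forall>n \<in> {1..N}. (\<lambda>j. bhat sg \<alpha> b N c u w n j \<omega>) \<longlonglongrightarrow> b n"
proof -
  interpret fir_setup M u w c
    by (rule fir_setup.intro[OF assms(1)], unfold_locales) (use assms in auto)
  show ?thesis
  proof (cases "N = 0")
    case True then show ?thesis by simp
  next
    case False
    then have N1: "N \<ge> 1" by simp
    have \<alpha>0: "\<alpha> \<longlonglongrightarrow> 0"
    proof -
      have "(\<lambda>j. (\<alpha> j)\<^sup>2) \<longlonglongrightarrow> 0" by (rule summable_LIMSEQ_zero[OF \<alpha>_sq])
      then have "(\<lambda>j. sqrt ((\<alpha> j)\<^sup>2)) \<longlonglongrightarrow> sqrt 0" by (rule tendsto_real_sqrt)
      then have "(\<lambda>j. \<bar>\<alpha> j\<bar>) \<longlonglongrightarrow> 0" by simp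
      then show ?thesis by (simp add: tendsto_rabs_zero_iff)
    qed
    have sgn: "\<forall>z<0. sg z = -1" "\<forall>z>0. sg z = 1" using sg_neg sg_pos by auto
    define p where "p = expectation (\<lambda>\<omega>. if u 0 \<omega> > c then 1 else 0 :: real)"
    define \<mu> where "\<mu> = expectation (u 0)"
    define \<mu>c where "\<mu>c = cond_exp_gt M (u 0) c"
    have p_eq: "p = measure M {\<omega> \<in> space M. u 0 \<omega> > c}"
    proof -
      have "p = expectation (indicator {\<omega> \<in> space M. u 0 \<omega> > c})"
        unfolding p_def by (intro Bochner_Integration.integral_cong) (auto simp: indicator_def)
      then show ?thesis by (simp add: Int_absorb2)
    qed
    have p0: "p > 0" using c_pos p_eq by simp
    have q_eq: "expectation (\<lambda>\<omega>. (if u 0 \<omega> > c then 1 else 0) * u 0 \<omega>) = p * \<mu>c"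
    proof -
      have "expectation (\<lambda>\<omega>. (if u 0 \<omega> > c then 1 else 0) * u 0 \<omega>) = (LINT x|M. indicator {\<omega> \<in> space M. u 0 \<omega> > c} x * u 0 x)"
        by (intro Bochner_Integration.integral_cong) (auto simp: indicator_def)
      then show ?thesis unfolding \<mu>c_def cond_exp_gt_def p_eq using c_pos by simp
    qed
    have A1: "AE \<omega> in M. (\<lambda>T. (\<Sum>t<T. phiN N (t mod (N+2)) * (if u (int t) \<omega> > c then 1 else 0)) / real T)
        \<longlonglongrightarrow> real N / real (N+2) * p"
      using F_ind[of "N+2" "phiN N"] unfolding sum_phiN p_def by simp
    have A2: "AE \<omega> in M. \<forall>k. \<bar>k\<bar> < int (N+2) \<longrightarrow> (\<lambda>T. (\<Sum>t<T. phiN N (t mod (N+2)) * ((if u (int t) \<omega> > c then 1 else 0) * u (int t + k) \<omega>)) / real T)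
               \<longlonglongrightarrow> real N / real (N+2) * (if k = 0 then p * \<mu>c else p * \<mu>)"
      unfolding AE_all_countable
    proof
      fix k :: int
      show "AE \<omega> in M. \<bar>k\<bar> < int (N+2) \<longrightarrow> (\<lambda>T. (\<Sum>t<T. phiN N (t mod (N+2)) * ((if u (int t) \<omega> > c then 1 else 0) * u (int t + k) \<omega>)) / real T)
               \<longlonglongrightarrow> real N / real (N+2) * (if k = 0 then p * \<mu>c else p * \<mu>)"
      proof (cases "k = 0")
        case True
        have "AE \<omega> in M. (\<lambda>T. (\<Sum>t<T. phiN N (t mod (N+2)) * ((if u (int t) \<omega> > c then 1 else 0) * u (int t) \<omega>)) / real T)
            \<longlonglongrightarrow> real N / real (N+2) * (p * \<mu>c)"
          using F_indu[of "N+2" "phiN N"] unfolding sum_phiN q_eq by simp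
        then show ?thesis using True by simp
      next
        case False
        show ?thesis
        proof (cases "\<bar>k\<bar> < int (N+2)")
          case True
          have "AE \<omega> in M. (\<lambda>T. (\<Sum>t<T. phiN N (t mod (N+2)) * ((if u (int t) \<omega> > c then 1 else 0) * u (int t + k) \<omega>)) / real T)
            \<longlonglongrightarrow> real N / real (N+2) * (p * \<mu>)"
            using F_shift[of "N+2" k "phiN N"] False True unfolding sum_phiN p_def \<mu>_def by simp
          then show ?thesis using False by simp
        qed simp
      qed
    qed
    have A3: "AE \<omega> in M. \<forall>k. (\<lambda>T. (\<Sum>t<T. phiN N (t mod (N+2)) * ((if u (int t) \<omega> > c then 1 else 0) * w (int t + k) \<omega>)) / real T) \<longlonglongrightarrow> 0"
      unfolding AE_all_countable using F_w[of "N+2"] by simp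
    have A5: "AE \<omega> in M. (\<lambda>T. (\<Sum>t<T. u (int t + 1) \<omega>) / real T) \<longlonglongrightarrow> \<mu>"
      using F_u1 unfolding \<mu>_def .
    have A6: "AE \<omega> in M. (\<lambda>T. (\<Sum>t<T. (if u (int t) \<omega> > c then 1 else 0) * u (int t) \<omega>) / real T) \<longlonglongrightarrow> p * \<mu>c"
      using F_indu[of 1 "\<lambda>_. 1"] unfolding q_eq by simp
    have A7: "AE \<omega> in M. (\<lambda>T. (\<Sum>t<T. (if u (int t) \<omega> > c then 1 else 0)) / real T) \<longlonglongrightarrow> p"
      using F_ind[of 1 "\<lambda>_. 1"] unfolding p_def by simp
    have cc1: "\<mu>c \<noteq> \<mu>" using c1 unfolding \<mu>c_def \<mu>_def .
    have cc2: "\<mu>c \<noteq> (1 - real N) * \<mu>" using c2 unfolding \<mu>c_def \<mu>_def .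
    show ?thesis using A1 A2 A3 A5 A6 A7
    proof eventually_elim
      fix \<omega>
      assume L1: "(\<lambda>T. (\<Sum>t<T. phiN N (t mod (N+2)) * (if u (int t) \<omega> > c then 1 else 0)) / real T) \<longlonglongrightarrow> real N / real (N+2) * p"
        and L2: "\<forall>k. \<bar>k\<bar> < int (N+2) \<longrightarrow> (\<lambda>T. (\<Sum>t<T. phiN N (t mod (N+2)) * ((if u (int t) \<omega> > c then 1 else 0) * u (int t + k) \<omega>)) / real T)
               \<longlonglongrightarrow> real N / real (N+2) * (if k = 0 then p * \<mu>c else p * \<mu>)"
        and L3: "\<forall>k. (\<lambda>T. (\<Sum>t<T. phiN N (t mod (N+2)) * ((if u (int t) \<omega> > c then 1 else 0) * w (int t + k) \<omega>)) / real T) \<longlonglongrightarrow> 0"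
        and L5: "(\<lambda>T. (\<Sum>t<T. u (int t + 1) \<omega>) / real T) \<longlonglongrightarrow> \<mu>"
        and L6: "(\<lambda>T. (\<Sum>t<T. (if u (int t) \<omega> > c then 1 else 0) * u (int t) \<omega>) / real T) \<longlonglongrightarrow> p * \<mu>c"
        and L7: "(\<lambda>T. (\<Sum>t<T. (if u (int t) \<omega> > c then 1 else 0)) / real T) \<longlonglongrightarrow> p"
      have dl1: "\<And>n. n \<in> {1..N} \<Longrightarrow> (\<lambda>j. d_avg b N c u w n (N*j) \<omega>) \<longlonglongrightarrow> (\<Sum>m=1..N. b m * (if m = n then \<mu>c else \<mu>))"
        using d_lim(2)[where N=N and p=p and c=c and u=u and \<omega>=\<omega> and w=w and \<mu>c=\<mu>c and \<mu>=\<mu> and b=b, OF N1 p0 L1] L2 L3 by auto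
      have dl0: "infinite (Sset N c u \<omega>)"
        using d_lim(1)[where N=N and p=p and c=c and u=u and \<omega>=\<omega> and w=w and \<mu>c=\<mu>c and \<mu>=\<mu> and n=1, OF N1 p0 L1] L2 L3 N1 by auto
      have dl: "(\<lambda>j. dhat sg \<alpha> b N c u w n j \<omega>) \<longlonglongrightarrow> (\<Sum>m=1..N. b m * (if m = n then \<mu>c else \<mu>))" if "n \<in> {1..N}" for n
        unfolding dhat_def by (rule sa_hat_conv[OF dl1[OF that] \<alpha>_pos \<alpha>0 \<alpha>_div sgn(1) sgn(2) sg_0])
      have e1l: "(\<lambda>j. e1hat sg \<alpha> N c u j \<omega>) \<longlonglongrightarrow> \<mu>"
        unfolding e1hat_def by (rule sa_hat_conv[OF e1_lim[OF dl0 N1 L5] \<alpha>_pos \<alpha>0 \<alpha>_div sgn(1) sgn(2) sg_0])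
      have e2l: "(\<lambda>j. e2hat sg \<alpha> N c u j \<omega>) \<longlonglongrightarrow> \<mu>c"
        unfolding e2hat_def by (rule sa_hat_conv[OF e2_lim[OF dl0 N1 p0 L6 L7] \<alpha>_pos \<alpha>0 \<alpha>_div sgn(1) sgn(2) sg_0])
      show "\<forall>n \<in> {1..N}. (\<lambda>j. bhat sg \<alpha> b N c u w n j \<omega>) \<longlonglongrightarrow> b n"
        using bhat_lim[OF N1 dl e1l e2l cc1 cc2] by blast
    qed
  qed
qed


end
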